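(* Fix $D\ge1$, $\bar L\ge1$, a law $P_L$ on $\{1,\dots,\bar L\}$, measurable $g_\nu:\{1,\dots,L\}\times\mathbb R^L\to[0,\infty)$ (for each $L$) with $\mathbb E_{\chi\sim\mathcal N(0,I_L)}g_\nu(\epsilon,\chi)=1$ for all $L,\epsilon$, and a measurable activation $\sigma:\mathbb R^L\to\mathbb R^L$ for each $L$. Let $k^*,v^*\in\mathbb R^D$ with $\|k^*\|^2=\|v^*\|^2=D$ and $(k^* )^\top v^*=0$. Generate $(L,\epsilon^*,X,y)$ by: $L\sim P_L$; $\epsilon^*\sim\mathrm{Unif}(\{1,\dots,L\})$; $X\in\mathbb R^{L\times D}$ with density $g_\nu(\epsilon^*,\frac1{\sqrt D}xk^* )\prod_{\ell=1}^L\mathcal N(x_\ell;0,I_D)$; $y=\frac1{\sqrt D}X_{\epsilon^*}v^*$. For $k,v\in\mathbb R^D$ let $f_{\sigma,k,v}(X)=\sigma(\frac1{\sqrt D}Xk)^\top\frac1{\sqrt D}Xv$ and $\mathcal E_\sigma(k,v)=\mathbb E[(y-f_{\sigma,k,v}(X))^2]$. Let $(k,v)$ satisfy $k^\top v^*=v^\top k^*=k^\top v=0$, and set $m_{kk^*}=\frac1Dk^\top k^*$, $m_{vv^*}=\frac1Dv^\top v^*$, $R_{kk}=\sqrt{\frac1Dk^\top k-m_{kk^*}^2}$, $R_{vv}=\sqrt{\frac1Dv^\top v-m_{vv^*}^2}$. Assuming the expectations below are finite, $$\mathcal E_\sigma(k,v)=\mathbb E_L\,\mathbb E_{\epsilon,\chi,\xi}\,g_\nu(\epsilon,\chi)\Big[1-2m_{vv^*}\sigma(m_{kk^*}\chi+R_{kk}\xi)_\epsilon+(m_{vv^*}^2+R_{vv}^2)\,\sigma(m_{kk^*}\chi+R_{kk}\xi)^\top\sigma(m_{kk^*}\chi+R_{kk}\xi)\Big],$$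 where $L\sim P_L$ and, conditionally on $L$, $\epsilon\sim\mathrm{Unif}(\{1,\dots,L\})$, $\chi\sim\mathcal N(0,I_L)$, $\xi\sim\mathcal N(0,I_L)$ are independent.
   Context: $\mathcal N(x;\omega,V)$ is the Gaussian density. Note $R_{kk},R_{vv}$ are well defined since $\frac1Dk^\top k\ge m_{kk^*}^2$ by Cauchy–Schwarz when $\|k^*\|^2=D$. *)

theory Defs
  imports "HOL-Probability.Probability"
begin

definition std_gauss :: "real measure" where
  "std_gauss = density lborel (\<lambda>x. ennreal (std_normal_density x))"

text \<open>N(0, I_n) on R^n; vectors in R^n are functions nat => real indexed by {..<n}
  (extensional, i.e. undefined outside {..<n}).\<close>
definition gauss_vec :: "nat \<Rightarrow> (nat \<Rightarrow> real) measure" where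
  "gauss_vec n = PiM {..<n} (\<lambda>_. std_gauss)"

definition gauss_mat :: "nat \<Rightarrow> nat \<Rightarrow> (nat \<Rightarrow> nat \<Rightarrow> real) measure" where
  "gauss_mat L D = PiM {..<L} (\<lambda>_. gauss_vec D)"

definition borel_vec :: "nat \<Rightarrow> (nat \<Rightarrow> real) measure" where
  "borel_vec n = PiM {..<n} (\<lambda>_. borel)"

definition vec :: "nat \<Rightarrow> (nat \<Rightarrow> real) \<Rightarrow> (nat \<Rightarrow> real)" where
  "vec n f = restrict f {..<n}"

definition dotp :: "nat \<Rightarrow> (nat \<Rightarrow> real) \<Rightarrow> (nat \<Rightarrow> real) \<Rightarrow> real" where
  "dotp D a b = (\<Sum>d<D. a d * b d)"

definition proj :: "nat \<Rightarrow> nat \<Rightarrow> (nat \<Rightarrow> nat \<Rightarrow> real) \<Rightarrow> (nat \<Rightarrow> real) \<Rightarrow> (nat \<Rightarrow> real)" where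
  "proj L D X w = vec L (\<lambda>l. dotp D (X l) w / sqrt (real D))"

definition model_out :: "(nat \<Rightarrow> (nat \<Rightarrow> real) \<Rightarrow> (nat \<Rightarrow> real)) \<Rightarrow> nat \<Rightarrow> nat
    \<Rightarrow> (nat \<Rightarrow> real) \<Rightarrow> (nat \<Rightarrow> real) \<Rightarrow> (nat \<Rightarrow> nat \<Rightarrow> real) \<Rightarrow> real" where
  "model_out \<sigma> L D k v X = (\<Sum>l<L. \<sigma> L (proj L D X k) l * proj L D X v l)"

definition data_X :: "(nat \<Rightarrow> nat \<Rightarrow> (nat \<Rightarrow> real) \<Rightarrow> real) \<Rightarrow> nat \<Rightarrow> nat \<Rightarrow> (nat \<Rightarrow> real)
    \<Rightarrow> nat \<Rightarrow> (nat \<Rightarrow> nat \<Rightarrow> real) measure" where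
  "data_X g L D ks eps = density (gauss_mat L D) (\<lambda>X. ennreal (g L eps (proj L D X ks)))"

definition risk :: "nat pmf \<Rightarrow> (nat \<Rightarrow> nat \<Rightarrow> (nat \<Rightarrow> real) \<Rightarrow> real)
    \<Rightarrow> (nat \<Rightarrow> (nat \<Rightarrow> real) \<Rightarrow> (nat \<Rightarrow> real)) \<Rightarrow> nat
    \<Rightarrow> (nat \<Rightarrow> real) \<Rightarrow> (nat \<Rightarrow> real) \<Rightarrow> (nat \<Rightarrow> real) \<Rightarrow> (nat \<Rightarrow> real) \<Rightarrow> real" where
  "risk PL g \<sigma> D ks vs k v =
     measure_pmf.expectation PL (\<lambda>L.
       measure_pmf.expectation (pmf_of_set {..<L}) (\<lambda>eps.
         \<integral>X. (proj L D X vs eps - model_out \<sigma> L D k v X)\<^sup>2 \<partial>data_X g L D ks eps))"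

end

theory Submission
  imports Defs
begin



lemma prob_space_std_gauss: "prob_space std_gauss"
  unfolding std_gauss_def by (rule prob_space_normal_density) simp

lemma sets_std_gauss[measurable_cong, simp]: "sets std_gauss = sets borel"
  unfolding std_gauss_def by simp

lemma space_std_gauss[simp]: "space std_gauss = UNIV"
  unfolding std_gauss_def by simp

lemma nn_integral_std_gauss:
  assumes [measurable]: "f \<in> borel_measurable borel"
  shows "(\<integral>\<^sup>+x. f x \<partial>std_gauss) = (\<integral>\<^sup>+x. ennreal (std_normal_density x) * f x \<partial>lborel)"
  unfolding std_gauss_def by (subst nn_integral_density) auto

lemma pair_sigma_finite_lborel: "pair_sigma_finite lborel lborel"
  by (simp add: pair_sigma_finite.intro lborel.sigma_finite_measure_axioms)

lemma shear_inner:
  fixes h :: "real \<Rightarrow> real \<Rightarrow> ennreal"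
  assumes [measurable]: "case_prod h \<in> borel_measurable (borel \<Otimes>\<^sub>M borel)"
  shows "(\<integral>\<^sup>+x. \<integral>\<^sup>+y. h x (y + b * x) \<partial>lborel \<partial>lborel) = (\<integral>\<^sup>+x. \<integral>\<^sup>+y. h x y \<partial>lborel \<partial>lborel)"
proof (rule nn_integral_cong)
  fix x :: real
  have m: "h x \<in> borel_measurable borel" by measurable
  show "(\<integral>\<^sup>+y. h x (y + b * x) \<partial>lborel) = (\<integral>\<^sup>+y. h x y \<partial>lborel)"
    using nn_integral_real_affine[OF m, of 1 "b * x"] by (simp add: add.commute)
qed

lemma shear_outer:
  fixes h :: "real \<Rightarrow> real \<Rightarrow> ennreal"
  assumes [measurable]: "case_prod h \<in> borel_measurable (borel \<Otimes>\<^sub>M borel)"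
  shows "(\<integral>\<^sup>+x. \<integral>\<^sup>+y. h (x + a * y) y \<partial>lborel \<partial>lborel) = (\<integral>\<^sup>+x. \<integral>\<^sup>+y. h x y \<partial>lborel \<partial>lborel)"
proof -
  have "(\<integral>\<^sup>+x. \<integral>\<^sup>+y. h (x + a * y) y \<partial>lborel \<partial>lborel) = (\<integral>\<^sup>+y. \<integral>\<^sup>+x. h (x + a * y) y \<partial>lborel \<partial>lborel)"
    by (rule pair_sigma_finite.Fubini'[OF pair_sigma_finite_lborel, symmetric]) measurable
  also have "\<dots> = (\<integral>\<^sup>+y. \<integral>\<^sup>+x. h x y \<partial>lborel \<partial>lborel)"
  proof (rule nn_integral_cong)
    fix y :: real
    have m: "(\<lambda>x. h x y) \<in> borel_measurable borel" by measurable
    show "(\<integral>\<^sup>+x. h (x + a * y) y \<partial>lborel) = (\<integral>\<^sup>+x. h x y \<partial>lborel)"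
      using nn_integral_real_affine[OF m, of 1 "a * y"] by (simp add: add.commute)
  qed
  also have "\<dots> = (\<integral>\<^sup>+x. \<integral>\<^sup>+y. h x y \<partial>lborel \<partial>lborel)"
    by (rule pair_sigma_finite.Fubini'[OF pair_sigma_finite_lborel]) measurable
  finally show ?thesis .
qed

lemma rot_lborel_aux:
  fixes cs sn :: real and h :: "real \<Rightarrow> real \<Rightarrow> ennreal"
  assumes cs: "cs\<^sup>2 + sn\<^sup>2 = 1" "cs \<noteq> -1"
  assumes [measurable]: "case_prod h \<in> borel_measurable (borel \<Otimes>\<^sub>M borel)"
  shows "(\<integral>\<^sup>+x. \<integral>\<^sup>+y. h (cs * x - sn * y) (sn * x + cs * y) \<partial>lborel \<partial>lborel) = (\<integral>\<^sup>+x. \<integral>\<^sup>+y. h x y \<partial>lborel \<partial>lborel)"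
proof -
  define t where "t = sn / (1 + cs)"
  have pc: "1 + cs \<noteq> 0" using cs by auto
  have t1: "1 - t * sn = cs"
  proof -
    have "t * sn = sn^2 / (1 + cs)" by (simp add: t_def power2_eq_square)
    also have "\<dots> = (1 - cs^2) / (1 + cs)" using cs by simp
    also have "\<dots> = 1 - cs" using pc by (simp add: field_simps power2_eq_square)
    finally show ?thesis by simp
  qed
  have t2: "t * (1 + cs) = sn" using pc by (simp add: t_def)
  define k where "k u v = h (u + (- t) * (v + sn * u)) (v + sn * u)" for u v
  have eq: "h (cs * x - sn * y) (sn * x + cs * y) = k (x + (- t) * y) y" for x y
  proof -
    have "(x + - t * y) + - t * (y + sn * (x + - t * y)) = x * (1 - t * sn) - y * (t * (1 + (1 - t * sn)))"
      by (simp add: algebra_simps)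
    also have "\<dots> = cs * x - sn * y" using t1 t2 by simp
    finally have a: "(x + - t * y) + - t * (y + sn * (x + - t * y)) = cs * x - sn * y" .
    have "y + sn * (x + - t * y) = sn * x + (1 - t * sn) * y"
      by (simp add: algebra_simps)
    then have b: "y + sn * (x + - t * y) = sn * x + cs * y"
      using t1 by simp
    show ?thesis unfolding k_def by (rule arg_cong2[where f=h, OF a[symmetric] b[symmetric]])
  qed
  have [measurable]: "case_prod k \<in> borel_measurable (borel \<Otimes>\<^sub>M borel)"
    unfolding k_def by measurable
  define k2 where "k2 u v = h (u + (- t) * v) v" for u v
  have [measurable]: "case_prod k2 \<in> borel_measurable (borel \<Otimes>\<^sub>M borel)"
    unfolding k2_def by measurable
  have "(\<integral>\<^sup>+x. \<integral>\<^sup>+y. h (cs * x - sn * y) (sn * x + cs * y) \<partial>lborel \<partial>lborel)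
      = (\<integral>\<^sup>+x. \<integral>\<^sup>+y. k (x + (- t) * y) y \<partial>lborel \<partial>lborel)"
    by (simp add: eq)
  also have "\<dots> = (\<integral>\<^sup>+x. \<integral>\<^sup>+y. k x y \<partial>lborel \<partial>lborel)"
    by (rule shear_outer) measurable
  also have "\<dots> = (\<integral>\<^sup>+x. \<integral>\<^sup>+y. k2 x (y + sn * x) \<partial>lborel \<partial>lborel)"
    by (simp add: k_def k2_def)
  also have "\<dots> = (\<integral>\<^sup>+x. \<integral>\<^sup>+y. k2 x y \<partial>lborel \<partial>lborel)"
    by (rule shear_inner) measurable
  also have "\<dots> = (\<integral>\<^sup>+x. \<integral>\<^sup>+y. h x y \<partial>lborel \<partial>lborel)"
    unfolding k2_def by (rule shear_outer) measurable
  finally show ?thesis .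
qed

lemma rot_lborel:
  fixes cs sn :: real and h :: "real \<Rightarrow> real \<Rightarrow> ennreal"
  assumes cs: "cs\<^sup>2 + sn\<^sup>2 = 1"
  assumes [measurable]: "case_prod h \<in> borel_measurable (borel \<Otimes>\<^sub>M borel)"
  shows "(\<integral>\<^sup>+x. \<integral>\<^sup>+y. h (cs * x - sn * y) (sn * x + cs * y) \<partial>lborel \<partial>lborel) = (\<integral>\<^sup>+x. \<integral>\<^sup>+y. h x y \<partial>lborel \<partial>lborel)"
proof (cases "cs = -1")
  case False
  then show ?thesis using rot_lborel_aux[OF cs] by auto
next
  case True
  then have sn: "sn = 0" using cs by (simp add: power2_eq_square)
  define h1 where "h1 u v = h (0 * u - 1 * v) (1 * u + 0 * v)" for u v
  have [measurable]: "case_prod h1 \<in> borel_measurable (borel \<Otimes>\<^sub>M borel)"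
    unfolding h1_def by measurable
  have "(\<integral>\<^sup>+x. \<integral>\<^sup>+y. h (cs * x - sn * y) (sn * x + cs * y) \<partial>lborel \<partial>lborel)
     = (\<integral>\<^sup>+x. \<integral>\<^sup>+y. h1 (0 * x - 1 * y) (1 * x + 0 * y) \<partial>lborel \<partial>lborel)"
    by (simp add: h1_def True sn)
  also have "\<dots> = (\<integral>\<^sup>+x. \<integral>\<^sup>+y. h1 x y \<partial>lborel \<partial>lborel)"
    by (rule rot_lborel_aux) auto
  also have "\<dots> = (\<integral>\<^sup>+x. \<integral>\<^sup>+y. h x y \<partial>lborel \<partial>lborel)"
    unfolding h1_def by (rule rot_lborel_aux) auto
  finally show ?thesis .
qed

lemma rot_gauss:
  fixes cs sn :: real and f :: "real \<Rightarrow> real \<Rightarrow> ennreal"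
  assumes cs: "cs\<^sup>2 + sn\<^sup>2 = 1"
  assumes [measurable]: "case_prod f \<in> borel_measurable (borel \<Otimes>\<^sub>M borel)"
  shows "(\<integral>\<^sup>+x. \<integral>\<^sup>+y. f (cs * x - sn * y) (sn * x + cs * y) \<partial>std_gauss \<partial>std_gauss) = (\<integral>\<^sup>+x. \<integral>\<^sup>+y. f x y \<partial>std_gauss \<partial>std_gauss)"
proof -
  define \<phi> where "\<phi> x y = ennreal (std_normal_density x * std_normal_density y)" for x y
  have [measurable]: "case_prod \<phi> \<in> borel_measurable (borel \<Otimes>\<^sub>M borel)"
    unfolding \<phi>_def by measurable
  have inv: "\<phi> (cs * x - sn * y) (sn * x + cs * y) = \<phi> x y" for x y
  proof -
    have "(cs * x - sn * y)\<^sup>2 + (sn * x + cs * y)\<^sup>2 = (cs\<^sup>2 + sn\<^sup>2) * (x\<^sup>2 + y\<^sup>2)"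
      by algebra
    then have e: "(cs * x - sn * y)\<^sup>2 + (sn * x + cs * y)\<^sup>2 = x\<^sup>2 + y\<^sup>2" using cs by simp
    have "std_normal_density a * std_normal_density b = (1 / sqrt (2 * pi))^2 * exp (- (a\<^sup>2 + b\<^sup>2) / 2)" for a b
      by (simp add: std_normal_density_def power2_eq_square exp_add[symmetric] field_simps)
    then show ?thesis unfolding \<phi>_def using e by simp
  qed
  have G: "(\<integral>\<^sup>+x. \<integral>\<^sup>+y. g x y \<partial>std_gauss \<partial>std_gauss) = (\<integral>\<^sup>+x. \<integral>\<^sup>+y. \<phi> x y * g x y \<partial>lborel \<partial>lborel)"
    if [measurable]: "case_prod g \<in> borel_measurable (borel \<Otimes>\<^sub>M borel)" for g
  proof -
    have "(\<integral>\<^sup>+x. \<integral>\<^sup>+y. g x y \<partial>std_gauss \<partial>std_gauss) = (\<integral>\<^sup>+x. ennreal (std_normal_density x) * (\<integral>\<^sup>+y. ennreal (std_normal_density y) * g x y \<partial>lborel) \<partial>lborel)"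
      by (subst nn_integral_std_gauss) (measurable, simp add: nn_integral_std_gauss)
    also have "\<dots> = (\<integral>\<^sup>+x. \<integral>\<^sup>+y. \<phi> x y * g x y \<partial>lborel \<partial>lborel)"
      by (auto simp: \<phi>_def nn_integral_cmult[symmetric] ennreal_mult mult.assoc intro!: nn_integral_cong)
    finally show ?thesis .
  qed
  define h where "h x y = \<phi> x y * f x y" for x y
  have [measurable]: "case_prod h \<in> borel_measurable (borel \<Otimes>\<^sub>M borel)"
    unfolding h_def by measurable
  have "(\<integral>\<^sup>+x. \<integral>\<^sup>+y. f (cs * x - sn * y) (sn * x + cs * y) \<partial>std_gauss \<partial>std_gauss)
     = (\<integral>\<^sup>+x. \<integral>\<^sup>+y. \<phi> x y * f (cs * x - sn * y) (sn * x + cs * y) \<partial>lborel \<partial>lborel)"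
    by (rule G) measurable
  also have "\<dots> = (\<integral>\<^sup>+x. \<integral>\<^sup>+y. h (cs * x - sn * y) (sn * x + cs * y) \<partial>lborel \<partial>lborel)"
    by (simp add: h_def inv)
  also have "\<dots> = (\<integral>\<^sup>+x. \<integral>\<^sup>+y. h x y \<partial>lborel \<partial>lborel)"
    by (rule rot_lborel[OF cs]) measurable
  also have "\<dots> = (\<integral>\<^sup>+x. \<integral>\<^sup>+y. f x y \<partial>std_gauss \<partial>std_gauss)"
    unfolding h_def by (rule G[symmetric]) measurable
  finally show ?thesis .
qed



definition gI :: "'i set \<Rightarrow> ('i \<Rightarrow> real) measure" where
  "gI I = PiM I (\<lambda>_. std_gauss)"

lemma psf: "product_sigma_finite (\<lambda>_::'i. std_gauss)"
  by (simp add: product_sigma_finite_def prob_space_imp_sigma_finite prob_space_std_gauss)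

lemma ppsp: "product_prob_space (\<lambda>_::'i. std_gauss)"
  by (rule product_prob_spaceI) (rule prob_space_std_gauss)

lemma prob_space_gI: "prob_space (gI I)"
  unfolding gI_def by (rule prob_space_PiM) (rule prob_space_std_gauss)

lemma sets_gI[measurable_cong]: "sets (gI I) = sets (PiM I (\<lambda>_. borel))"
  unfolding gI_def by (rule sets_PiM_cong) auto

lemma space_gI: "space (gI I) = (\<Pi>\<^sub>E i\<in>I. UNIV)"
  unfolding gI_def by (simp add: space_PiM)

lemma pair_sigma_finite_G: "pair_sigma_finite std_gauss std_gauss"
  by (simp add: pair_sigma_finite.intro prob_space_imp_sigma_finite prob_space_std_gauss)


lemma gI_insert:
  assumes "finite I" "i \<notin> I" and f: "f \<in> borel_measurable (gI (insert i I))"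
  shows "(\<integral>\<^sup>+x. f x \<partial>gI (insert i I)) = (\<integral>\<^sup>+x. \<integral>\<^sup>+a. f (x(i := a)) \<partial>std_gauss \<partial>gI I)"
  unfolding gI_def
  by (rule product_sigma_finite.product_nn_integral_insert[OF psf assms(1,2)]) (use f in \<open>simp only: gI_def\<close>)

lemma meas_upd:
  assumes "x \<in> space (gI I)" "i \<notin> I"
  shows "(\<lambda>a. x(i := a)) \<in> measurable borel (gI (insert i I))"
proof -
  have "(\<lambda>a. x(i := a)) \<in> measurable std_gauss (gI (insert i I))"
    using measurable_component_update[of x I "\<lambda>_. std_gauss" i] assms unfolding gI_def by simp
  then show ?thesis using measurable_cong_sets[OF sets_std_gauss refl] by simp
qed

lemma meas_upd2:
  assumes z: "z \<in> space (gI I)" and "p \<notin> I" "q \<notin> I" "p \<noteq> q"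
  shows "(\<lambda>(a, b). z(q := b, p := a)) \<in> measurable (borel \<Otimes>\<^sub>M borel) (gI (insert p (insert q I)))"
proof -
  have e: "(\<lambda>(a, b). z(q := b, p := a)) = (\<lambda>\<omega> i. (if i = p then fst \<omega> else if i = q then snd \<omega> else z i))"
    using assms by (auto simp: fun_eq_iff)
  show ?thesis unfolding e gI_def
    by (rule measurable_PiM_single') (use z in \<open>auto simp: gI_def space_PiM PiE_iff extensional_def\<close>)
qed

definition rotv :: "'i \<Rightarrow> 'i \<Rightarrow> real \<Rightarrow> real \<Rightarrow> ('i \<Rightarrow> real) \<Rightarrow> ('i \<Rightarrow> real)" where
  "rotv p q cs sn x = x(p := cs * x p - sn * x q, q := sn * x p + cs * x q)"

definition flipv :: "'i \<Rightarrow> ('i \<Rightarrow> real) \<Rightarrow> ('i \<Rightarrow> real)" where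
  "flipv p x = x(p := - x p)"

lemma meas_rotv:
  assumes "p \<in> I" "q \<in> I"
  shows "rotv p q cs sn \<in> measurable (gI I) (gI I)"
proof -
  have e: "rotv p q cs sn = (\<lambda>x i. if i = q then sn * x p + cs * x q else if i = p then cs * x p - sn * x q else x i)"
    by (auto simp: rotv_def fun_eq_iff)
  show ?thesis unfolding e
    by (rule measurable_PiM_single'[of I _ _ "\<lambda>_. std_gauss", folded gI_def])
       (use assms in \<open>auto simp: space_gI PiE_iff extensional_def\<close>)
qed

lemma meas_flipv:
  assumes "p \<in> I"
  shows "flipv p \<in> measurable (gI I) (gI I)"
proof -
  have e: "flipv p = (\<lambda>x i. if i = p then - x p else x i)"
    by (auto simp: flipv_def fun_eq_iff)
  show ?thesis unfolding e
    by (rule measurable_PiM_single'[of I _ _ "\<lambda>_. std_gauss", folded gI_def])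
       (use assms in \<open>auto simp: space_gI PiE_iff extensional_def\<close>)
qed


lemma rot_gI:
  assumes I: "finite I" "p \<in> I" "q \<in> I" "p \<noteq> q" and cs: "cs\<^sup>2 + sn\<^sup>2 = 1"
    and f[measurable]: "f \<in> borel_measurable (gI I)"
  shows "(\<integral>\<^sup>+x. f (rotv p q cs sn x) \<partial>gI I) = (\<integral>\<^sup>+x. f x \<partial>gI I)"
proof -
  define I' where "I' = I - {p, q}"
  have II: "I = insert p (insert q I')" using I by (auto simp: I'_def)
  have fin: "finite I'" "finite (insert q I')" "p \<notin> insert q I'" "q \<notin> I'"
    using I by (auto simp: I'_def)
  have split: "(\<integral>\<^sup>+x. F x \<partial>gI I) = (\<integral>\<^sup>+z. \<integral>\<^sup>+b. \<integral>\<^sup>+a. F (z(q := b, p := a)) \<partial>std_gauss \<partial>std_gauss \<partial>gI I')"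
    if F[measurable]: "F \<in> borel_measurable (gI I)" for F
  proof -
    have F': "F \<in> borel_measurable (gI (insert p (insert q I')))" using F by (simp only: II[symmetric])
    have "(\<integral>\<^sup>+x. F x \<partial>gI I) = (\<integral>\<^sup>+x. \<integral>\<^sup>+a. F (x(p := a)) \<partial>std_gauss \<partial>gI (insert q I'))"
      unfolding II by (rule gI_insert[OF fin(2,3) F'])
    also have "\<dots> = (\<integral>\<^sup>+z. \<integral>\<^sup>+b. \<integral>\<^sup>+a. F (z(q := b, p := a)) \<partial>std_gauss \<partial>std_gauss \<partial>gI I')"
    proof (rule gI_insert[OF fin(1,4)])
      have "(\<lambda>(x, a). F (x(p := a))) \<in> borel_measurable (gI (insert q I') \<Otimes>\<^sub>M std_gauss)"
      proof -
        have "(\<lambda>(x, a). x(p := a)) \<in> measurable (gI (insert q I') \<Otimes>\<^sub>M std_gauss) (gI (insert p (insert q I')))"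
          unfolding gI_def using measurable_add_dim[of p "insert q I'" "\<lambda>_. std_gauss"] fin
          by simp
        from measurable_compose[OF this F'] show ?thesis by (simp add: case_prod_unfold)
      qed
      then show "(\<lambda>x. \<integral>\<^sup>+ a. F (x(p := a)) \<partial>std_gauss) \<in> borel_measurable (gI (insert q I'))"
        by (rule sigma_finite_measure.borel_measurable_nn_integral[OF prob_space_imp_sigma_finite[OF prob_space_std_gauss]])
    qed
    finally show ?thesis .
  qed
  have "(\<integral>\<^sup>+x. f (rotv p q cs sn x) \<partial>gI I) = (\<integral>\<^sup>+z. \<integral>\<^sup>+b. \<integral>\<^sup>+a. f (rotv p q cs sn (z(q := b, p := a))) \<partial>std_gauss \<partial>std_gauss \<partial>gI I')"
    by (rule split) (rule measurable_compose[OF meas_rotv f], use I in auto)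
  also have "\<dots> = (\<integral>\<^sup>+z. \<integral>\<^sup>+b. \<integral>\<^sup>+a. f (z(q := b, p := a)) \<partial>std_gauss \<partial>std_gauss \<partial>gI I')"
  proof (rule nn_integral_cong)
    fix z assume z: "z \<in> space (gI I')"
    define f' where "f' a b = f (z(q := b, p := a))" for a b
    have mz: "(\<lambda>(a, b). z(q := b, p := a)) \<in> measurable (borel \<Otimes>\<^sub>M borel) (gI I)"
      using meas_upd2[OF z, of p q] fin I by (simp only: II[symmetric] insert_iff simp_thms)
    have [measurable]: "case_prod f' \<in> borel_measurable (borel \<Otimes>\<^sub>M borel)"
    proof -
      have "case_prod f' = f \<circ> (\<lambda>(a, b). z(q := b, p := a))"
        by (auto simp: f'_def fun_eq_iff)
      then show ?thesis using measurable_comp[OF mz f] by simp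
    qed
    have e: "rotv p q cs sn (z(q := b, p := a)) = z(q := sn * a + cs * b, p := cs * a - sn * b)" for a b
      using I by (auto simp: rotv_def fun_eq_iff)
    have "(\<integral>\<^sup>+b. \<integral>\<^sup>+a. f (rotv p q cs sn (z(q := b, p := a))) \<partial>std_gauss \<partial>std_gauss)
        = (\<integral>\<^sup>+b. \<integral>\<^sup>+a. f' (cs * a - sn * b) (sn * a + cs * b) \<partial>std_gauss \<partial>std_gauss)"
      by (simp add: e f'_def)
    also have "\<dots> = (\<integral>\<^sup>+a. \<integral>\<^sup>+b. f' (cs * a - sn * b) (sn * a + cs * b) \<partial>std_gauss \<partial>std_gauss)"
      by (rule pair_sigma_finite.Fubini'[OF pair_sigma_finite_G]) measurable
    also have "\<dots> = (\<integral>\<^sup>+a. \<integral>\<^sup>+b. f' a b \<partial>std_gauss \<partial>std_gauss)"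
      by (rule rot_gauss[OF cs]) measurable
    also have "\<dots> = (\<integral>\<^sup>+b. \<integral>\<^sup>+a. f' a b \<partial>std_gauss \<partial>std_gauss)"
      by (rule pair_sigma_finite.Fubini'[OF pair_sigma_finite_G, symmetric]) measurable
    finally show "(\<integral>\<^sup>+b. \<integral>\<^sup>+a. f (rotv p q cs sn (z(q := b, p := a))) \<partial>std_gauss \<partial>std_gauss)
        = (\<integral>\<^sup>+b. \<integral>\<^sup>+a. f (z(q := b, p := a)) \<partial>std_gauss \<partial>std_gauss)"
      by (simp add: f'_def)
  qed
  also have "\<dots> = (\<integral>\<^sup>+x. f x \<partial>gI I)"
    by (rule split[symmetric]) measurable
  finally show ?thesis .
qed


lemma gauss_neg:
  assumes [measurable]: "h \<in> borel_measurable borel"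
  shows "(\<integral>\<^sup>+a. h (- a) \<partial>std_gauss) = (\<integral>\<^sup>+a. h a \<partial>std_gauss)"
proof -
  have m: "(\<lambda>a. ennreal (std_normal_density a) * h a) \<in> borel_measurable borel" by measurable
  have "(\<integral>\<^sup>+a. h a \<partial>std_gauss) = (\<integral>\<^sup>+a. ennreal (std_normal_density a) * h a \<partial>lborel)"
    by (rule nn_integral_std_gauss) measurable
  also have "\<dots> = (\<integral>\<^sup>+a. ennreal (std_normal_density (0 + -1 * a)) * h (0 + -1 * a) \<partial>lborel)"
    using nn_integral_real_affine[OF m, of "-1" 0] by simp
  also have "\<dots> = (\<integral>\<^sup>+a. ennreal (std_normal_density a) * h (- a) \<partial>lborel)"
    by (simp add: std_normal_density_def)
  also have "\<dots> = (\<integral>\<^sup>+a. h (- a) \<partial>std_gauss)"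
    by (rule nn_integral_std_gauss[symmetric]) measurable
  finally show ?thesis ..
qed

lemma flip_gI:
  assumes I: "finite I" "p \<in> I" and f[measurable]: "f \<in> borel_measurable (gI I)"
  shows "(\<integral>\<^sup>+x. f (flipv p x) \<partial>gI I) = (\<integral>\<^sup>+x. f x \<partial>gI I)"
proof -
  define I' where "I' = I - {p}"
  have II: "I = insert p I'" and fin: "finite I'" "p \<notin> I'" using I by (auto simp: I'_def)
  have f': "f \<in> borel_measurable (gI (insert p I'))" using f by (simp add: II[symmetric])
  have f'': "(\<lambda>x. f (flipv p x)) \<in> borel_measurable (gI (insert p I'))"
    using measurable_compose[OF meas_flipv[OF I(2)] f] by (simp add: II[symmetric])
  have "(\<integral>\<^sup>+x. f (flipv p x) \<partial>gI I) = (\<integral>\<^sup>+z. \<integral>\<^sup>+a. f (flipv p (z(p := a))) \<partial>std_gauss \<partial>gI I')"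
    unfolding II by (rule gI_insert[OF fin f''])
  also have "\<dots> = (\<integral>\<^sup>+z. \<integral>\<^sup>+a. f (z(p := a)) \<partial>std_gauss \<partial>gI I')"
  proof (rule nn_integral_cong)
    fix z assume z: "z \<in> space (gI I')"
    have [measurable]: "(\<lambda>a. f (z(p := a))) \<in> borel_measurable borel"
      using measurable_comp[OF meas_upd[OF z fin(2)] f'] by (simp add: comp_def)
    have e: "flipv p (z(p := a)) = z(p := - a)" for a by (simp add: flipv_def)
    show "(\<integral>\<^sup>+a. f (flipv p (z(p := a))) \<partial>std_gauss) = (\<integral>\<^sup>+a. f (z(p := a)) \<partial>std_gauss)"
      unfolding e by (rule gauss_neg[where h = "\<lambda>a. f (z(p := a))"]) measurable
  qed
  also have "\<dots> = (\<integral>\<^sup>+x. f x \<partial>gI I)"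
    unfolding II by (rule gI_insert[OF fin f', symmetric])
  finally show ?thesis .
qed



definition lin :: "'i set \<Rightarrow> 'j set \<Rightarrow> ('j \<Rightarrow> 'i \<Rightarrow> real) \<Rightarrow> ('i \<Rightarrow> real) \<Rightarrow> ('j \<Rightarrow> real)" where
  "lin I J c x = (\<lambda>j\<in>J. \<Sum>i\<in>I. c j i * x i)"

definition sameLaw :: "'i set \<Rightarrow> ('j \<Rightarrow> 'i \<Rightarrow> real) \<Rightarrow> ('j \<Rightarrow> 'i \<Rightarrow> real) \<Rightarrow> bool" where
  "sameLaw I c c' \<longleftrightarrow> (\<forall>(J::'j set) f. finite J \<longrightarrow> f \<in> borel_measurable (gI J) \<longrightarrow>
      (\<integral>\<^sup>+x. f (lin I J c x) \<partial>gI I) = (\<integral>\<^sup>+x. f (lin I J c' x) \<partial>gI I))"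

definition orthon :: "'i set \<Rightarrow> 'j set \<Rightarrow> ('j \<Rightarrow> 'i \<Rightarrow> real) \<Rightarrow> bool" where
  "orthon I J c \<longleftrightarrow> (\<forall>j\<in>J. \<forall>j'\<in>J. (\<Sum>i\<in>I. c j i * c j' i) = (if j = j' then 1 else 0))"

definition reach :: "'i set \<Rightarrow> ('j \<Rightarrow> 'i \<Rightarrow> real) \<Rightarrow> ('j \<Rightarrow> 'i \<Rightarrow> real) \<Rightarrow> bool" where
  "reach I c c' \<longleftrightarrow> sameLaw I c c' \<and> (\<forall>K. orthon I K c \<longrightarrow> orthon I K c')"

lemma meas_lin: "lin I J c \<in> measurable (gI I) (gI J)"
proof -
  have e: "lin I J c = (\<lambda>x j. if j \<in> J then (\<Sum>i\<in>I. c j i * x i) else undefined)"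
    by (auto simp: lin_def fun_eq_iff)
  show ?thesis unfolding e
  proof (rule measurable_PiM_single'[of J _ _ "\<lambda>_. std_gauss", folded gI_def])
    fix j assume "j \<in> J"
    have "(\<lambda>x. \<Sum>i\<in>I. c j i * x i) \<in> borel_measurable (PiM I (\<lambda>_. borel))"
      by measurable
    then show "(\<lambda>x. if j \<in> J then \<Sum>i\<in>I. c j i * x i else undefined) \<in> measurable (gI I) std_gauss"
      using \<open>j \<in> J\<close> measurable_cong_sets[OF sets_gI sets_std_gauss] by simp
  qed (auto simp: space_gI PiE_iff extensional_def)
qed

lemma sum_split2:
  assumes "finite I" "p \<in> I" "q \<in> I" "p \<noteq> q"
  shows "(\<Sum>i\<in>I. F i) = F p + F q + (\<Sum>i\<in>I - {p, q}. F i)"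
proof -
  have "(\<Sum>i\<in>I. F i) = F p + (\<Sum>i\<in>I - {p}. F i)" using assms by (simp add: sum.remove)
  also have "(\<Sum>i\<in>I - {p}. F i) = F q + (\<Sum>i\<in>I - {p} - {q}. F i)" using assms by (simp add: sum.remove)
  finally show ?thesis by (simp add: Diff_insert2[symmetric] insert_commute add.assoc)
qed

lemma rot_dot:
  assumes "finite I" "p \<in> I" "q \<in> I" "p \<noteq> q" "cs\<^sup>2 + sn\<^sup>2 = 1"
  shows "(\<Sum>i\<in>I. rotv p q cs sn u i * rotv p q cs sn w i) = (\<Sum>i\<in>I. u i * w i)"
proof -
  have r: "(\<Sum>i\<in>I - {p, q}. rotv p q cs sn u i * rotv p q cs sn w i) = (\<Sum>i\<in>I - {p, q}. u i * w i)"
    by (rule sum.cong) (auto simp: rotv_def)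
  have "(cs * u p - sn * u q) * (cs * w p - sn * w q) + (sn * u p + cs * u q) * (sn * w p + cs * w q)
      = (cs\<^sup>2 + sn\<^sup>2) * (u p * w p + u q * w q)" by algebra
  then show ?thesis
    using assms r by (simp add: sum_split2[OF assms(1-4)] rotv_def)
qed

lemma rot_lin:
  assumes "finite I" "p \<in> I" "q \<in> I" "p \<noteq> q"
  shows "lin I J c (rotv p q cs (- sn) x) = lin I J (\<lambda>j. rotv p q cs sn (c j)) x"
proof -
  have "(\<Sum>i\<in>I. c j i * rotv p q cs (- sn) x i) = (\<Sum>i\<in>I. rotv p q cs sn (c j) i * x i)" for j
  proof -
    have r: "(\<Sum>i\<in>I - {p, q}. c j i * rotv p q cs (- sn) x i) = (\<Sum>i\<in>I - {p, q}. rotv p q cs sn (c j) i * x i)"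
      by (rule sum.cong) (auto simp: rotv_def)
    have "c j p * (cs * x p + sn * x q) + c j q * (- sn * x p + cs * x q)
       = (cs * c j p - sn * c j q) * x p + (sn * c j p + cs * c j q) * x q" by algebra
    then show ?thesis using assms r by (simp add: sum_split2[OF assms(1-4)] rotv_def)
  qed
  then show ?thesis by (simp add: lin_def)
qed

lemma flip_lin:
  assumes "finite I" "p \<in> I"
  shows "lin I J c (flipv p x) = lin I J (\<lambda>j. flipv p (c j)) x"
proof -
  have "(\<Sum>i\<in>I. c j i * flipv p x i) = (\<Sum>i\<in>I. flipv p (c j) i * x i)" for j
    using assms by (simp add: sum.remove flipv_def)
  then show ?thesis by (simp add: lin_def)
qed

lemma flip_dot:
  assumes "finite I" "p \<in> I"
  shows "(\<Sum>i\<in>I. flipv p u i * flipv p w i) = (\<Sum>i\<in>I. u i * w i)"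
  using assms by (simp add: sum.remove flipv_def)

lemma reach_refl: "reach I c c"
  by (simp add: reach_def sameLaw_def)

lemma reach_trans: "reach I c c1 \<Longrightarrow> reach I c1 c2 \<Longrightarrow> reach I c c2"
  by (simp add: reach_def sameLaw_def)

lemma reach_rot:
  assumes "finite I" "p \<in> I" "q \<in> I" "p \<noteq> q" "cs\<^sup>2 + sn\<^sup>2 = 1"
  shows "reach I c (\<lambda>j. rotv p q cs sn (c j))"
  unfolding reach_def
proof
  show "sameLaw I c (\<lambda>j. rotv p q cs sn (c j))"
    unfolding sameLaw_def
  proof (intro allI impI)
    fix J :: "'b set" and f :: "('b \<Rightarrow> real) \<Rightarrow> ennreal" assume J: "finite J" and f: "f \<in> borel_measurable (gI J)"
    have m: "(\<lambda>x. f (lin I J c x)) \<in> borel_measurable (gI I)"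
      by (rule measurable_compose[OF meas_lin f])
    have cs': "cs\<^sup>2 + (- sn)\<^sup>2 = 1" using assms by simp
    have "(\<integral>\<^sup>+x. f (lin I J c x) \<partial>gI I) = (\<integral>\<^sup>+x. f (lin I J c (rotv p q cs (- sn) x)) \<partial>gI I)"
      by (rule rot_gI[OF assms(1-4) cs' m, symmetric])
    also have "\<dots> = (\<integral>\<^sup>+x. f (lin I J (\<lambda>j. rotv p q cs sn (c j)) x) \<partial>gI I)"
      by (simp add: rot_lin[OF assms(1-4)])
    finally show "(\<integral>\<^sup>+x. f (lin I J c x) \<partial>gI I) = (\<integral>\<^sup>+x. f (lin I J (\<lambda>j. rotv p q cs sn (c j)) x) \<partial>gI I)" .
  qed
  show "\<forall>K. orthon I K c \<longrightarrow> orthon I K (\<lambda>j. rotv p q cs sn (c j))"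
    using rot_dot[OF assms] by (simp add: orthon_def)
qed

lemma reach_flip:
  assumes "finite I" "p \<in> I"
  shows "reach I c (\<lambda>j. flipv p (c j))"
  unfolding reach_def
proof
  show "sameLaw I c (\<lambda>j. flipv p (c j))"
    unfolding sameLaw_def
  proof (intro allI impI)
    fix J :: "'b set" and f :: "('b \<Rightarrow> real) \<Rightarrow> ennreal" assume J: "finite J" and f: "f \<in> borel_measurable (gI J)"
    have m: "(\<lambda>x. f (lin I J c x)) \<in> borel_measurable (gI I)"
      by (rule measurable_compose[OF meas_lin f])
    have "(\<integral>\<^sup>+x. f (lin I J c x) \<partial>gI I) = (\<integral>\<^sup>+x. f (lin I J c (flipv p x)) \<partial>gI I)"
      by (rule flip_gI[OF assms m, symmetric])
    also have "\<dots> = (\<integral>\<^sup>+x. f (lin I J (\<lambda>j. flipv p (c j)) x) \<partial>gI I)"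
      by (simp add: flip_lin[OF assms])
    finally show "(\<integral>\<^sup>+x. f (lin I J c x) \<partial>gI I) = (\<integral>\<^sup>+x. f (lin I J (\<lambda>j. flipv p (c j)) x) \<partial>gI I)" .
  qed
  show "\<forall>K. orthon I K c \<longrightarrow> orthon I K (\<lambda>j. flipv p (c j))"
    using flip_dot[OF assms] by (simp add: orthon_def)
qed



lemma zero_out:
  fixes c :: "'j \<Rightarrow> 'i \<Rightarrow> real"
  assumes I: "finite I" and S: "finite S"
  shows "S \<subseteq> I - T - {p} \<Longrightarrow> p \<in> I - T \<Longrightarrow> j0 \<notin> J \<Longrightarrow> (\<forall>j\<in>J. \<forall>i\<in>I - T. c j i = 0) \<Longrightarrow>
    \<exists>c'. reach I c c' \<and> (\<forall>j\<in>J. c' j = c j) \<and> (\<forall>i\<in>S. c' j0 i = 0) \<and> (\<forall>i. i \<notin> S \<and> i \<noteq> p \<longrightarrow> c' j0 i = c j0 i)"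
  using S
proof (induction S rule: finite_induct)
  case empty
  then show ?case by (intro exI[of _ c]) (auto simp: reach_refl)
next
  case (insert i S)
  then obtain c2 where c2: "reach I c c2" "\<forall>j\<in>J. c2 j = c j" "\<forall>i\<in>S. c2 j0 i = 0"
    "\<forall>i'. i' \<notin> S \<and> i' \<noteq> p \<longrightarrow> c2 j0 i' = c j0 i'" by auto
  have iI: "i \<in> I" "i \<noteq> p" "i \<notin> T" using insert by auto
  have pI: "p \<in> I" "p \<notin> T" using insert by auto
  define a where "a = c2 j0 p"
  define b where "b = c2 j0 i"
  define r where "r = sqrt (a\<^sup>2 + b\<^sup>2)"
  show ?case
  proof (cases "r = 0")
    case True
    then have "b = 0" unfolding r_def by (simp add: add_nonneg_eq_0_iff)
    then show ?thesis using c2 insert.hyps by (intro exI[of _ c2]) (auto simp: b_def)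
  next
    case False
    have "r \<ge> 0" unfolding r_def by simp
    then have rpos: "r > 0" using False by linarith
    have r2: "r\<^sup>2 = a\<^sup>2 + b\<^sup>2" unfolding r_def by simp
    define cs where "cs = a / r"
    define sn where "sn = - b / r"
    have pos: "a\<^sup>2 + b\<^sup>2 \<noteq> 0" using rpos r2 by auto
    have cs: "cs\<^sup>2 + sn\<^sup>2 = 1" using pos by (simp add: cs_def sn_def power_divide r2 add_divide_distrib[symmetric])
    define c3 where "c3 = (\<lambda>j. rotv p i cs sn (c2 j))"
    have R: "reach I c2 c3" unfolding c3_def by (rule reach_rot[OF I pI(1) iI(1) iI(2)[symmetric] cs])
    have "sn * a + cs * b = 0" by (simp add: cs_def sn_def field_simps)
    then have z: "c3 j0 i = 0" using iI by (simp add: c3_def rotv_def a_def b_def)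
    have J: "\<forall>j\<in>J. c3 j = c j"
    proof
      fix j assume "j \<in> J"
      then have "c2 j p = 0" "c2 j i = 0" "c2 j = c j" using c2 insert.prems pI iI by auto
      then show "c3 j = c j" by (auto simp: c3_def rotv_def fun_eq_iff)
    qed
    show ?thesis
    proof (intro exI[of _ c3] conjI)
      show "reach I c c3" by (rule reach_trans[OF c2(1) R])
      show "\<forall>j\<in>J. c3 j = c j" by fact
      show "\<forall>i'\<in>insert i S. c3 j0 i' = 0"
        using z c2(3) insert.prems iI by (auto simp: c3_def rotv_def)
      show "\<forall>i'. i' \<notin> insert i S \<and> i' \<noteq> p \<longrightarrow> c3 j0 i' = c j0 i'"
        using c2(4) by (auto simp: c3_def rotv_def)
    qed
  qed
qed

lemma reduce:
  fixes c :: "'j \<Rightarrow> 'i \<Rightarrow> real"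
  assumes I: "finite I" and J: "finite J"
  shows "orthon I J c \<Longrightarrow> \<exists>c' \<pi>. reach I c c' \<and> inj_on \<pi> J \<and> \<pi> ` J \<subseteq> I \<and>
     (\<forall>j\<in>J. \<forall>i\<in>I. c' j i = (if i = \<pi> j then 1 else 0))"
  using J
proof (induction J rule: finite_induct)
  case empty
  then show ?case by (intro exI[of _ c]) (auto simp: reach_refl)
next
  case (insert j0 J)
  have oJ: "orthon I J c" using insert.prems by (simp add: orthon_def)
  obtain c1 \<pi> where c1: "reach I c c1" "inj_on \<pi> J" "\<pi> ` J \<subseteq> I"
    "\<forall>j\<in>J. \<forall>i\<in>I. c1 j i = (if i = \<pi> j then 1 else 0)"
    using insert.IH[OF oJ] by blast
  have o1: "orthon I (insert j0 J) c1" using c1(1) insert.prems by (simp add: reach_def)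
  define T where "T = \<pi> ` J"
  have vanT: "c1 j0 t = 0" if tT: "t \<in> T" for t
  proof -
    obtain j where j: "j \<in> J" "t = \<pi> j" using tT by (auto simp: T_def)
    have "(\<Sum>i\<in>I. c1 j0 i * c1 j i) = 0" using o1 j insert.hyps by (auto simp: orthon_def)
    moreover have "(\<Sum>i\<in>I. c1 j0 i * c1 j i) = c1 j0 (\<pi> j)"
    proof -
      have "(\<Sum>i\<in>I. c1 j0 i * c1 j i) = (\<Sum>i\<in>I. if i = \<pi> j then c1 j0 i else 0)"
        using c1(4) j by (intro sum.cong) auto
      also have "\<dots> = c1 j0 (\<pi> j)" using c1(3) j I by (auto simp: sum.delta)
      finally show ?thesis .
    qed
    ultimately show ?thesis using j by simp
  qed
  have unit1: "(\<Sum>i\<in>I. c1 j0 i * c1 j0 i) = 1" using o1 by (simp add: orthon_def)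
  obtain p where p: "p \<in> I" "c1 j0 p \<noteq> 0"
  proof (rule ccontr)
    assume "\<not> thesis"
    then have "\<forall>i\<in>I. c1 j0 i = 0" using that by blast
    then show False using unit1 by simp
  qed
  have pT: "p \<notin> T" using vanT p by auto
  have vanJ: "\<forall>j\<in>J. \<forall>i\<in>I - T. c1 j i = 0" using c1(4) T_def by auto
  obtain c2 where c2: "reach I c1 c2" "\<forall>j\<in>J. c2 j = c1 j" "\<forall>i\<in>I - T - {p}. c2 j0 i = 0"
     "\<forall>i. i \<notin> I - T - {p} \<and> i \<noteq> p \<longrightarrow> c2 j0 i = c1 j0 i"
    using zero_out[OF I, of "I - T - {p}" T p j0 J c1] I p pT insert.hyps vanJ by auto
  have o2: "orthon I (insert j0 J) c2" using c2(1) o1 by (simp add: reach_def)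
  have supp: "\<forall>i\<in>I. i \<noteq> p \<longrightarrow> c2 j0 i = 0"
  proof (intro ballI impI)
    fix i assume i: "i \<in> I" "i \<noteq> p"
    show "c2 j0 i = 0"
    proof (cases "i \<in> T")
      case True
      then have "i \<notin> I - T - {p}" by simp
      then have "c2 j0 i = c1 j0 i" using c2(4) i(2) by blast
      then show ?thesis using vanT[OF True] by simp
    next
      case False
      then have "i \<in> I - T - {p}" using i by simp
      then show ?thesis using c2(3) by blast
    qed
  qed
  have "(\<Sum>i\<in>I. c2 j0 i * c2 j0 i) = 1" using o2 by (simp add: orthon_def)
  moreover have "(\<Sum>i\<in>I. c2 j0 i * c2 j0 i) = c2 j0 p * c2 j0 p"
  proof -
    have "(\<Sum>i\<in>I. c2 j0 i * c2 j0 i) = (\<Sum>i\<in>I. if i = p then c2 j0 i * c2 j0 i else 0)"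
      using supp by (intro sum.cong) auto
    also have "\<dots> = c2 j0 p * c2 j0 p" using p I by (simp add: sum.delta)
    finally show ?thesis .
  qed
  ultimately have pm: "c2 j0 p = 1 \<or> c2 j0 p = -1"
    by (metis mult_cancel_left1 mult_minus_left square_eq_1_iff)
  have c2J: "\<forall>j\<in>J. \<forall>i\<in>I. c2 j i = (if i = \<pi> j then 1 else 0)" using c2(2) c1(4) by auto
  have c2Jp: "\<forall>j\<in>J. c2 j p = 0" using c2J p pT T_def by auto
  obtain c3 where c3: "reach I c c3" "\<forall>j\<in>J. c3 j = c2 j" "c3 j0 p = 1" "\<forall>i\<in>I. i \<noteq> p \<longrightarrow> c3 j0 i = 0"
  proof (cases "c2 j0 p = 1")
    case True
    then show ?thesis using that[of c2] reach_trans[OF c1(1) c2(1)] supp by auto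
  next
    case False
    then have m1: "c2 j0 p = -1" using pm by auto
    define c3 where "c3 = (\<lambda>j. flipv p (c2 j))"
    have "reach I c c3" using reach_trans[OF reach_trans[OF c1(1) c2(1)] reach_flip[OF I p(1)]] c3_def by simp
    moreover have "\<forall>j\<in>J. c3 j = c2 j" using c2Jp by (auto simp: c3_def flipv_def fun_eq_iff)
    moreover have "c3 j0 p = 1" using m1 by (simp add: c3_def flipv_def)
    moreover have "\<forall>i\<in>I. i \<noteq> p \<longrightarrow> c3 j0 i = 0" using supp by (simp add: c3_def flipv_def)
    ultimately show ?thesis using that by blast
  qed
  define \<pi>' where "\<pi>' = \<pi>(j0 := p)"
  show ?case
  proof (intro exI[of _ c3] exI[of _ \<pi>'] conjI)
    show "reach I c c3" by fact
    show "inj_on \<pi>' (insert j0 J)"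
      using c1(2) pT insert.hyps by (auto simp: \<pi>'_def T_def inj_on_def)
    show "\<pi>' ` insert j0 J \<subseteq> I" using c1(3) p insert.hyps by (auto simp: \<pi>'_def)
    show "\<forall>j\<in>insert j0 J. \<forall>i\<in>I. c3 j i = (if i = \<pi>' j then 1 else 0)"
      using c3 c2J insert.hyps by (auto simp: \<pi>'_def)
  qed
qed

lemma PL:
  fixes c :: "'j \<Rightarrow> 'i \<Rightarrow> real" and f :: "('j \<Rightarrow> real) \<Rightarrow> ennreal"
  assumes I: "finite I" and J: "finite J" and o: "orthon I J c"
    and f: "f \<in> borel_measurable (gI J)"
  shows "(\<integral>\<^sup>+x. f (lin I J c x) \<partial>gI I) = (\<integral>\<^sup>+y. f y \<partial>gI J)"
proof -
  obtain c' \<pi> where c': "reach I c c'" "inj_on \<pi> J" "\<pi> ` J \<subseteq> I"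
     "\<forall>j\<in>J. \<forall>i\<in>I. c' j i = (if i = \<pi> j then 1 else 0)"
    using reduce[OF I J o] by blast
  have "(\<integral>\<^sup>+x. f (lin I J c x) \<partial>gI I) = (\<integral>\<^sup>+x. f (lin I J c' x) \<partial>gI I)"
    using c'(1) J f by (simp add: reach_def sameLaw_def)
  also have "\<dots> = (\<integral>\<^sup>+x. f (\<lambda>j\<in>J. x (\<pi> j)) \<partial>gI I)"
  proof -
    have "lin I J c' x = (\<lambda>j\<in>J. x (\<pi> j))" for x
    proof -
      have "(\<Sum>i\<in>I. c' j i * x i) = x (\<pi> j)" if "j \<in> J" for j
      proof -
        have "(\<Sum>i\<in>I. c' j i * x i) = (\<Sum>i\<in>I. if i = \<pi> j then x i else 0)"
          using c'(4) that by (intro sum.cong) auto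
        also have "\<dots> = x (\<pi> j)" using c'(3) that I by (auto simp: sum.delta)
        finally show ?thesis .
      qed
      then show ?thesis by (auto simp: lin_def)
    qed
    then show ?thesis by simp
  qed
  also have "\<dots> = (\<integral>\<^sup>+y. f y \<partial>distr (gI I) (gI J) (\<lambda>x. \<lambda>j\<in>J. x (\<pi> j)))"
  proof (rule nn_integral_distr[symmetric])
    show "(\<lambda>x. \<lambda>j\<in>J. x (\<pi> j)) \<in> measurable (gI I) (gI J)"
      unfolding gI_def by (rule measurable_restrict) (use c'(3) in \<open>auto intro!: measurable_component_singleton\<close>)
  qed (simp add: f)
  also have "distr (gI I) (gI J) (\<lambda>x. \<lambda>j\<in>J. x (\<pi> j)) = gI J"
    unfolding gI_def using distr_PiM_reindex[of I "\<lambda>_. std_gauss" \<pi> J] c'(2,3) prob_space_std_gauss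
    by auto
  finally show ?thesis .
qed




definition comb :: "'a set \<Rightarrow> 'b set \<Rightarrow> ('a \<Rightarrow> real) \<Rightarrow> ('b \<Rightarrow> real) \<Rightarrow> ('a + 'b \<Rightarrow> real)" where
  "comb A B y1 y2 = (\<lambda>j\<in>A <+> B. case_sum y1 y2 j)"

lemma ballPlus: "(\<forall>i\<in>A <+> B. P i) \<longleftrightarrow> (\<forall>a\<in>A. P (Inl a)) \<and> (\<forall>b\<in>B. P (Inr b))"
  by auto

lemma sigma_finite_gI: "sigma_finite_measure (gI I)"
  by (rule prob_space_imp_sigma_finite[OF prob_space_gI])

lemma emeasure_gI:
  assumes "finite I" "\<And>i. i \<in> I \<Longrightarrow> C i \<in> sets borel"
  shows "emeasure (gI I) (Pi\<^sub>E I C) = (\<Prod>i\<in>I. emeasure std_gauss (C i))"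
  unfolding gI_def by (rule product_sigma_finite.emeasure_PiM[OF psf]) (use assms in auto)

lemma meas_comb: "(\<lambda>(y1, y2). comb A B y1 y2) \<in> measurable (gI A \<Otimes>\<^sub>M gI B) (gI (A <+> B))"
proof -
  have e: "(\<lambda>(y1, y2). comb A B y1 y2) = (\<lambda>p. \<lambda>j\<in>A <+> B. case p of (y1, y2) \<Rightarrow> case_sum y1 y2 j)"
    by (auto simp: comb_def fun_eq_iff)
  show ?thesis unfolding e gI_def
proof (rule measurable_restrict)
  fix j assume j: "j \<in> A <+> B"
  show "(\<lambda>x. case x of (y1, y2) \<Rightarrow> case_sum y1 y2 j) \<in> measurable (Pi\<^sub>M A (\<lambda>_. std_gauss) \<Otimes>\<^sub>M Pi\<^sub>M B (\<lambda>_. std_gauss)) std_gauss"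
  proof (cases j)
    case (Inl a)
    then have a: "a \<in> A" using j by auto
    have "(\<lambda>x. fst x a) \<in> measurable (Pi\<^sub>M A (\<lambda>_. std_gauss) \<Otimes>\<^sub>M Pi\<^sub>M B (\<lambda>_. std_gauss)) std_gauss"
      by (rule measurable_compose[OF measurable_fst measurable_component_singleton[OF a]])
    then show ?thesis using Inl by (simp add: case_prod_unfold)
  next
    case (Inr b)
    then have b: "b \<in> B" using j by auto
    have "(\<lambda>x. snd x b) \<in> measurable (Pi\<^sub>M A (\<lambda>_. std_gauss) \<Otimes>\<^sub>M Pi\<^sub>M B (\<lambda>_. std_gauss)) std_gauss"
      by (rule measurable_compose[OF measurable_snd measurable_component_singleton[OF b]])
    then show ?thesis using Inr by (simp add: case_prod_unfold)
  qed
qed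
qed

lemma distr_comb:
  assumes A: "finite A" and B: "finite B"
  shows "distr (gI A \<Otimes>\<^sub>M gI B) (gI (A <+> B)) (\<lambda>(y1, y2). comb A B y1 y2) = gI (A <+> B)"
  unfolding gI_def
proof (rule product_sigma_finite.PiM_eqI[OF psf])
  show "finite (A <+> B)" using A B by simp
  show "sets (distr (Pi\<^sub>M A (\<lambda>_. std_gauss) \<Otimes>\<^sub>M Pi\<^sub>M B (\<lambda>_. std_gauss)) (Pi\<^sub>M (A <+> B) (\<lambda>_. std_gauss)) (\<lambda>(y1, y2). comb A B y1 y2)) = sets (Pi\<^sub>M (A <+> B) (\<lambda>_. std_gauss))"
    by simp
  fix C assume C: "\<And>i. i \<in> A <+> B \<Longrightarrow> C i \<in> sets std_gauss"
  interpret pA: sigma_finite_measure "gI A" by (rule sigma_finite_gI)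
  interpret pB: sigma_finite_measure "gI B" by (rule sigma_finite_gI)
  have CA: "Pi\<^sub>E A (C \<circ> Inl) \<in> sets (gI A)"
    unfolding gI_def using C by (intro sets_PiM_I_finite A) auto
  have CB: "Pi\<^sub>E B (C \<circ> Inr) \<in> sets (gI B)"
    unfolding gI_def using C by (intro sets_PiM_I_finite B) auto
  have pre: "(\<lambda>(y1, y2). comb A B y1 y2) -` Pi\<^sub>E (A <+> B) C \<inter> space (gI A \<Otimes>\<^sub>M gI B)
      = Pi\<^sub>E A (C \<circ> Inl) \<times> Pi\<^sub>E B (C \<circ> Inr)"
    by (auto simp: comb_def space_pair_measure space_gI PiE_iff extensional_def ballPlus split: sum.splits)
  have "emeasure (distr (gI A \<Otimes>\<^sub>M gI B) (gI (A <+> B)) (\<lambda>(y1, y2). comb A B y1 y2)) (Pi\<^sub>E (A <+> B) C)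
     = emeasure (gI A \<Otimes>\<^sub>M gI B) (Pi\<^sub>E A (C \<circ> Inl) \<times> Pi\<^sub>E B (C \<circ> Inr))"
  proof -
    have "Pi\<^sub>E (A <+> B) C \<in> sets (gI (A <+> B))"
      unfolding gI_def using C A B by (intro sets_PiM_I_finite) auto
    from emeasure_distr[OF meas_comb this]
    show ?thesis unfolding pre .
  qed
  also have "\<dots> = emeasure (gI A) (Pi\<^sub>E A (C \<circ> Inl)) * emeasure (gI B) (Pi\<^sub>E B (C \<circ> Inr))"
    by (rule pB.emeasure_pair_measure_Times[OF CA CB])
  also have "\<dots> = (\<Prod>i\<in>A <+> B. emeasure std_gauss (C i))"
  proof -
    have "emeasure (gI A) (Pi\<^sub>E A (C \<circ> Inl)) = (\<Prod>i\<in>A. emeasure std_gauss (C (Inl i)))"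
      using C A by (subst emeasure_gI) auto
    moreover have "emeasure (gI B) (Pi\<^sub>E B (C \<circ> Inr)) = (\<Prod>i\<in>B. emeasure std_gauss (C (Inr i)))"
      using C B by (subst emeasure_gI) auto
    ultimately show ?thesis using A B by (simp add: prod.Plus comp_def)
  qed
  finally show "emeasure (distr (Pi\<^sub>M A (\<lambda>_. std_gauss) \<Otimes>\<^sub>M Pi\<^sub>M B (\<lambda>_. std_gauss)) (Pi\<^sub>M (A <+> B) (\<lambda>_. std_gauss)) (\<lambda>(y1, y2). comb A B y1 y2)) (Pi\<^sub>E (A <+> B) C)
     = (\<Prod>i\<in>A <+> B. emeasure std_gauss (C i))" by (simp add: gI_def)
qed

lemma SUM:
  assumes A: "finite A" and B: "finite B" and f: "f \<in> borel_measurable (gI (A <+> B))"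
  shows "(\<integral>\<^sup>+y. f y \<partial>gI (A <+> B)) = (\<integral>\<^sup>+y1. \<integral>\<^sup>+y2. f (comb A B y1 y2) \<partial>gI B \<partial>gI A)"
proof -
  interpret pB: sigma_finite_measure "gI B" by (rule sigma_finite_gI)
  have "(\<integral>\<^sup>+y. f y \<partial>gI (A <+> B)) = (\<integral>\<^sup>+y. f y \<partial>distr (gI A \<Otimes>\<^sub>M gI B) (gI (A <+> B)) (\<lambda>(y1, y2). comb A B y1 y2))"
    by (simp add: distr_comb[OF A B])
  also have "\<dots> = (\<integral>\<^sup>+p. f (case p of (y1, y2) \<Rightarrow> comb A B y1 y2) \<partial>(gI A \<Otimes>\<^sub>M gI B))"
    by (rule nn_integral_distr[OF meas_comb]) (simp add: f)
  also have "\<dots> = (\<integral>\<^sup>+y1. \<integral>\<^sup>+y2. f (comb A B y1 y2) \<partial>gI B \<partial>gI A)"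
  proof (rule pB.nn_integral_fst[symmetric, where f = "\<lambda>p. f (case p of (y1, y2) \<Rightarrow> comb A B y1 y2)", simplified])
    show "(\<lambda>p. f (case p of (y1, y2) \<Rightarrow> comb A B y1 y2)) \<in> borel_measurable (gI A \<Otimes>\<^sub>M gI B)"
      by (rule measurable_compose[OF meas_comb f])
  qed
  finally show ?thesis .
qed

definition unflat :: "'a set \<Rightarrow> 'b set \<Rightarrow> ('a \<times> 'b \<Rightarrow> real) \<Rightarrow> ('a \<Rightarrow> 'b \<Rightarrow> real)" where
  "unflat A B x = (\<lambda>a\<in>A. \<lambda>b\<in>B. x (a, b))"

definition flatM :: "'a set \<Rightarrow> 'b set \<Rightarrow> ('a \<Rightarrow> 'b \<Rightarrow> real) \<Rightarrow> ('a \<times> 'b \<Rightarrow> real)" where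
  "flatM A B X = (\<lambda>p\<in>A \<times> B. X (fst p) (snd p))"

lemma psf2: "product_sigma_finite (\<lambda>_::'a. gI (B::'b set))"
  by (simp add: product_sigma_finite_def sigma_finite_gI)

lemma meas_flatM: "flatM A B \<in> measurable (PiM A (\<lambda>_. gI B)) (gI (A \<times> B))"
  unfolding flatM_def gI_def
proof (rule measurable_restrict)
  fix p assume p: "p \<in> A \<times> B"
  show "(\<lambda>X. X (fst p) (snd p)) \<in> measurable (Pi\<^sub>M A (\<lambda>_. Pi\<^sub>M B (\<lambda>_. std_gauss))) std_gauss"
    using measurable_compose[OF measurable_component_singleton[of "fst p" A "\<lambda>_. Pi\<^sub>M B (\<lambda>_. std_gauss)"] measurable_component_singleton[of "snd p" B "\<lambda>_. std_gauss"]] p by auto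
qed

lemma distr_flatM:
  assumes A: "finite A" and B: "finite B"
  shows "distr (PiM A (\<lambda>_. gI B)) (gI (A \<times> B)) (flatM A B) = gI (A \<times> B)"
  unfolding gI_def[of "A \<times> B"]
proof (rule product_sigma_finite.PiM_eqI[OF psf])
  show "finite (A \<times> B)" using A B by simp
  show "sets (distr (PiM A (\<lambda>_. gI B)) (Pi\<^sub>M (A \<times> B) (\<lambda>_. std_gauss)) (flatM A B)) = sets (Pi\<^sub>M (A \<times> B) (\<lambda>_. std_gauss))"
    by simp
  fix C assume C: "\<And>i. i \<in> A \<times> B \<Longrightarrow> C i \<in> sets std_gauss"
  have CB: "Pi\<^sub>E B (\<lambda>b. C (a, b)) \<in> sets (gI B)" if "a \<in> A" for a
    unfolding gI_def using C that by (intro sets_PiM_I_finite B) auto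
  have pre: "flatM A B -` Pi\<^sub>E (A \<times> B) C \<inter> space (PiM A (\<lambda>_. gI B)) = Pi\<^sub>E A (\<lambda>a. Pi\<^sub>E B (\<lambda>b. C (a, b)))"
    by (auto simp: flatM_def space_PiM space_gI PiE_iff extensional_def)
  have "emeasure (distr (PiM A (\<lambda>_. gI B)) (Pi\<^sub>M (A \<times> B) (\<lambda>_. std_gauss)) (flatM A B)) (Pi\<^sub>E (A \<times> B) C)
      = emeasure (PiM A (\<lambda>_. gI B)) (Pi\<^sub>E A (\<lambda>a. Pi\<^sub>E B (\<lambda>b. C (a, b))))"
  proof -
    have "Pi\<^sub>E (A \<times> B) C \<in> sets (Pi\<^sub>M (A \<times> B) (\<lambda>_. std_gauss))"
      using C A B by (intro sets_PiM_I_finite) auto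
    from emeasure_distr[OF meas_flatM[of A B, unfolded gI_def[of "A \<times> B"]] this]
    show ?thesis unfolding pre .
  qed
  also have "\<dots> = (\<Prod>a\<in>A. emeasure (gI B) (Pi\<^sub>E B (\<lambda>b. C (a, b))))"
    by (rule product_sigma_finite.emeasure_PiM[OF psf2 A]) (use CB in auto)
  also have "\<dots> = (\<Prod>a\<in>A. \<Prod>b\<in>B. emeasure std_gauss (C (a, b)))"
    using C B by (intro prod.cong refl emeasure_gI) auto
  also have "\<dots> = (\<Prod>i\<in>A \<times> B. emeasure std_gauss (C i))"
    by (simp add: prod.cartesian_product)
  finally show "emeasure (distr (PiM A (\<lambda>_. gI B)) (Pi\<^sub>M (A \<times> B) (\<lambda>_. std_gauss)) (flatM A B)) (Pi\<^sub>E (A \<times> B) C)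
      = (\<Prod>i\<in>A \<times> B. emeasure std_gauss (C i))" .
qed

lemma NF:
  assumes A: "finite A" and B: "finite B" and f: "f \<in> borel_measurable (PiM A (\<lambda>_. gI B))"
  shows "(\<integral>\<^sup>+X. f X \<partial>PiM A (\<lambda>_. gI B)) = (\<integral>\<^sup>+x. f (unflat A B x) \<partial>gI (A \<times> B))"
proof -
  have mu: "unflat A B \<in> measurable (gI (A \<times> B)) (PiM A (\<lambda>_. gI B))"
    unfolding unflat_def gI_def
    by (intro measurable_restrict) (auto intro!: measurable_component_singleton)
  have "(\<integral>\<^sup>+x. f (unflat A B x) \<partial>gI (A \<times> B)) = (\<integral>\<^sup>+x. f (unflat A B x) \<partial>distr (PiM A (\<lambda>_. gI B)) (gI (A \<times> B)) (flatM A B))"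
    by (simp add: distr_flatM[OF A B])
  also have "\<dots> = (\<integral>\<^sup>+X. f (unflat A B (flatM A B X)) \<partial>PiM A (\<lambda>_. gI B))"
    by (rule nn_integral_distr[OF meas_flatM]) (simp add: measurable_compose[OF mu f])
  also have "\<dots> = (\<integral>\<^sup>+X. f X \<partial>PiM A (\<lambda>_. gI B))"
  proof (rule nn_integral_cong)
    fix X assume "X \<in> space (PiM A (\<lambda>_. gI B))"
    then have "unflat A B (flatM A B X) = X"
      by (auto simp: unflat_def flatM_def space_PiM space_gI PiE_iff extensional_def fun_eq_iff)
    then show "f (unflat A B (flatM A B X)) = f X" by simp
  qed
  finally show ?thesis ..
qed

lemma restrict_gI:
  assumes "finite K" "J \<subseteq> K" and f: "f \<in> borel_measurable (gI J)"
  shows "(\<integral>\<^sup>+x. f x \<partial>gI J) = (\<integral>\<^sup>+x. f (restrict x J) \<partial>gI K)"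
proof -
  have d: "distr (gI K) (gI J) (\<lambda>x. restrict x J) = gI J"
    unfolding gI_def
    by (rule product_prob_space.distr_PiM_restrict_finite[OF ppsp]) (use assms finite_subset in auto)
  have "(\<integral>\<^sup>+x. f x \<partial>gI J) = (\<integral>\<^sup>+x. f x \<partial>distr (gI K) (gI J) (\<lambda>x. restrict x J))" by (simp add: d)
  also have "\<dots> = (\<integral>\<^sup>+x. f (restrict x J) \<partial>gI K)"
  proof -
    have mr: "(\<lambda>x. restrict x J) \<in> measurable (gI K) (gI J)"
      unfolding gI_def by (rule measurable_restrict_subset) fact
    show ?thesis by (rule nn_integral_distr[OF mr]) (simp add: f)
  qed
  finally show ?thesis .
qed



lemma gauss_integrable_density:
  assumes [measurable]: "f \<in> borel_measurable borel"
  shows "integrable std_gauss f \<longleftrightarrow> integrable lborel (\<lambda>x. std_normal_density x * f x)"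
  unfolding std_gauss_def by (subst integrable_density) auto

lemma gauss_integral_density:
  assumes [measurable]: "f \<in> borel_measurable borel"
  shows "integral\<^sup>L std_gauss f = integral\<^sup>L lborel (\<lambda>x. std_normal_density x * f x)"
  unfolding std_gauss_def by (subst integral_density) auto

lemma gauss_m1: "integrable std_gauss (\<lambda>t. t)" "integral\<^sup>L std_gauss (\<lambda>t. t) = 0"
proof -
  show "integrable std_gauss (\<lambda>t. t)"
    using integrable_std_normal_moment[of 1] by (simp add: gauss_integrable_density)
  show "integral\<^sup>L std_gauss (\<lambda>t. t) = 0"
    using integral_std_normal_moment_odd[of 0] by (simp add: gauss_integral_density)
qed

lemma gauss_m2: "integrable std_gauss (\<lambda>t. t * t)" "integral\<^sup>L std_gauss (\<lambda>t. t * t) = 1"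
proof -
  show "integrable std_gauss (\<lambda>t. t * t)"
    using integrable_std_normal_moment[of 2] by (simp add: gauss_integrable_density power2_eq_square)
  show "integral\<^sup>L std_gauss (\<lambda>t. t * t) = 1"
    using integral_std_normal_moment_even[of 1] by (simp add: gauss_integral_density power2_eq_square)
qed

lemma gauss_m0: "integrable std_gauss (\<lambda>t. 1 :: real)" "integral\<^sup>L std_gauss (\<lambda>t. 1 :: real) = 1"
proof -
  interpret prob_space std_gauss by (rule prob_space_std_gauss)
  show "integrable std_gauss (\<lambda>t. 1 :: real)" by simp
  show "integral\<^sup>L std_gauss (\<lambda>t. 1 :: real) = 1" using prob_space by simp
qed

lemma prod_moment:
  assumes K: "finite K" and j: "j \<in> K" and j': "j' \<in> K"
  shows "integrable (gI K) (\<lambda>y. y j * y j')" "(\<integral>y. y j * y j' \<partial>gI K) = (if j = j' then 1 else 0)"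
proof -
  define f where "f = (\<lambda>i t. (if i = j then t else 1) * (if i = j' then t else (1::real)))"
  have fi: "integrable std_gauss (f i)" for i
  proof (cases "i = j")
    case True
    then show ?thesis using gauss_m1(1) gauss_m2(1) by (cases "i = j'") (simp_all add: f_def)
  next
    case False
    then show ?thesis using gauss_m0(1) gauss_m1(1) by (cases "i = j'") (simp_all add: f_def)
  qed
  have e: "(\<Prod>i\<in>K. f i (y i)) = y j * y j'" for y
    using K j j' by (simp add: f_def prod.distrib prod.delta)
  have "integrable (PiM K (\<lambda>_. std_gauss)) (\<lambda>y. \<Prod>i\<in>K. f i (y i))"
    by (rule product_sigma_finite.product_integrable_prod[OF psf K fi])
  then show "integrable (gI K) (\<lambda>y. y j * y j')" by (simp add: e gI_def)
  have "(\<integral>y. (\<Prod>i\<in>K. f i (y i)) \<partial>PiM K (\<lambda>_. std_gauss)) = (\<Prod>i\<in>K. integral\<^sup>L std_gauss (f i))"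
    by (rule product_sigma_finite.product_integral_prod[OF psf K fi])
  also have "\<dots> = (if j = j' then 1 else 0)"
  proof (cases "j = j'")
    case True
    have "integral\<^sup>L std_gauss (f i) = 1" if "i \<in> K" for i
      using gauss_m0(2) gauss_m2(2) True by (cases "i = j") (simp_all add: f_def)
    then show ?thesis using True by simp
  next
    case False
    have "integral\<^sup>L std_gauss (f j) = 0" using gauss_m1 False by (simp add: f_def)
    then show ?thesis using False K j by (auto simp: prod_zero_iff intro!: bexI[of _ j])
  qed
  finally show "(\<integral>y. y j * y j' \<partial>gI K) = (if j = j' then 1 else 0)" by (simp add: e gI_def)
qed

lemma E2:
  assumes K: "finite K"
  shows "(\<integral>\<^sup>+y. ennreal ((\<Sum>j\<in>K. \<gamma> j * y j)\<^sup>2) \<partial>gI K) = ennreal (\<Sum>j\<in>K. (\<gamma> j)\<^sup>2)"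
proof -
  have e: "(\<Sum>j\<in>K. \<gamma> j * y j)\<^sup>2 = (\<Sum>j\<in>K. \<Sum>j'\<in>K. \<gamma> j * \<gamma> j' * (y j * y j'))" for y
    by (simp add: power2_eq_square sum_product algebra_simps)
  have int: "integrable (gI K) (\<lambda>y. (\<Sum>j\<in>K. \<Sum>j'\<in>K. \<gamma> j * \<gamma> j' * (y j * y j')))"
  proof (intro Bochner_Integration.integrable_sum integrable_mult_right)
    fix j j' assume "j \<in> K" "j' \<in> K"
    then show "integrable (gI K) (\<lambda>y. y j * y j')" by (rule prod_moment(1)[OF K])
  qed
  have "(\<integral>y. (\<Sum>j\<in>K. \<Sum>j'\<in>K. \<gamma> j * \<gamma> j' * (y j * y j')) \<partial>gI K)
      = (\<Sum>j\<in>K. \<Sum>j'\<in>K. \<gamma> j * \<gamma> j' * (\<integral>y. y j * y j' \<partial>gI K))"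
    using prod_moment(1)[OF K] by (simp add: Bochner_Integration.integral_sum Bochner_Integration.integrable_sum integrable_mult_right)
  also have "\<dots> = (\<Sum>j\<in>K. \<Sum>j'\<in>K. \<gamma> j * \<gamma> j' * (if j = j' then 1 else 0))"
    using prod_moment(2)[OF K] by (intro sum.cong refl) auto
  also have "\<dots> = (\<Sum>j\<in>K. (\<gamma> j)\<^sup>2)"
    using K by (simp add: power2_eq_square if_distrib sum.delta cong: if_cong)
  finally have I: "(\<integral>y. (\<Sum>j\<in>K. \<gamma> j * y j)\<^sup>2 \<partial>gI K) = (\<Sum>j\<in>K. (\<gamma> j)\<^sup>2)" by (simp add: e)
  have "(\<integral>\<^sup>+y. ennreal ((\<Sum>j\<in>K. \<gamma> j * y j)\<^sup>2) \<partial>gI K) = ennreal (\<integral>y. (\<Sum>j\<in>K. \<gamma> j * y j)\<^sup>2 \<partial>gI K)"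
  proof -
    have int2: "integrable (gI K) (\<lambda>y. (\<Sum>j\<in>K. \<gamma> j * y j)\<^sup>2)" using int by (simp only: e)
    show ?thesis by (rule nn_integral_eq_integral[OF int2]) simp
  qed
  then show ?thesis by (simp add: I)
qed



lemma dotp_comm: "dotp D a b = dotp D b a"
  by (simp add: dotp_def mult.commute)

lemma dotp_diff_right: "dotp D a (\<lambda>d. b d - c * e d) = dotp D a b - c * dotp D a e"
  by (simp add: dotp_def algebra_simps sum_subtractf sum_distrib_left)

lemma dotp_diff_left: "dotp D (\<lambda>d. b d - c * e d) a = dotp D b a - c * dotp D e a"
  by (simp add: dotp_def algebra_simps sum_subtractf sum_distrib_left)

lemma dotp_self_nonneg: "dotp D a a \<ge> 0"
  by (simp add: dotp_def sum_nonneg)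

lemma dotp_self_zero: "dotp D a a = 0 \<Longrightarrow> d < D \<Longrightarrow> a d = 0"
  unfolding dotp_def by (subst (asm) sum_nonneg_eq_0_iff) auto

lemma sum_lessThan_add2: "(\<Sum>d<D + 2. F d) = (\<Sum>d<D. F d) + F D + F (Suc D)"
  by (simp add: numeral_2_eq_2)

locale P4 =
  fixes D :: nat and ks vs k v :: "nat \<Rightarrow> real"
  assumes D: "D \<ge> 1"
    and ks_norm: "dotp D ks ks = real D" and vs_norm: "dotp D vs vs = real D"
    and ks_vs: "dotp D ks vs = 0"
    and k_vs: "dotp D k vs = 0" and v_ks: "dotp D v ks = 0" and k_v: "dotp D k v = 0"
begin

definition "mk = dotp D k ks / D"
definition "mv = dotp D v vs / D"
definition "Rk = sqrt (dotp D k k / D - mk\<^sup>2)"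
definition "Rv = sqrt (dotp D v v / D - mv\<^sup>2)"
definition "kp = (\<lambda>d. k d - mk * ks d)"
definition "vp = (\<lambda>d. v d - mv * vs d)"
definition "sD = sqrt (real D)"

lemma Dpos: "real D > 0" using D by simp
lemma sD_pos: "sD > 0" using Dpos by (simp add: sD_def)
lemma sD_sq: "sD * sD = real D" using Dpos by (simp add: sD_def)

lemma kp_ks: "dotp D kp ks = 0"
proof -
  have "dotp D kp ks = dotp D k ks - mk * dotp D ks ks" unfolding kp_def by (rule dotp_diff_left)
  then show ?thesis using Dpos by (simp add: ks_norm mk_def)
qed
lemma kp_vs: "dotp D kp vs = 0"
  by (simp add: kp_def dotp_diff_left ks_vs k_vs)
lemma vp_vs: "dotp D vp vs = 0"
proof -
  have "dotp D vp vs = dotp D v vs - mv * dotp D vs vs" unfolding vp_def by (rule dotp_diff_left)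
  then show ?thesis using Dpos by (simp add: vs_norm mv_def)
qed
lemma vp_ks: "dotp D vp ks = 0"
  by (simp add: vp_def dotp_diff_left ks_vs v_ks dotp_comm[of D vs ks])
lemma kp_vp: "dotp D kp vp = 0"
proof -
  have "dotp D kp vp = dotp D kp v - mv * dotp D kp vs" by (simp add: vp_def dotp_diff_right)
  also have "dotp D kp v = dotp D k v - mk * dotp D ks v" by (simp add: kp_def dotp_diff_left)
  finally show ?thesis using k_v v_ks kp_vs by (simp add: dotp_comm[of D ks v])
qed
lemma kp_kp: "dotp D kp kp = real D * Rk\<^sup>2"
proof -
  have e: "dotp D kp kp = dotp D k k - mk\<^sup>2 * real D"
  proof -
    have "dotp D kp kp = dotp D k kp - mk * dotp D ks kp" by (simp add: kp_def[of ] dotp_diff_left)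
    also have "dotp D ks kp = 0" using kp_ks by (simp add: dotp_comm)
    also have "dotp D k kp = dotp D k k - mk * dotp D k ks" by (simp add: kp_def dotp_diff_right)
    also have "dotp D k ks = mk * real D" using Dpos by (simp add: mk_def)
    finally show ?thesis by (simp add: power2_eq_square algebra_simps)
  qed
  have eq: "dotp D k k / D - mk\<^sup>2 = dotp D kp kp / D" using Dpos by (simp add: e field_simps)
  have nn: "dotp D kp kp / D \<ge> 0" using dotp_self_nonneg[of D kp] Dpos by simp
  have "Rk\<^sup>2 = dotp D kp kp / D" unfolding Rk_def eq using nn by simp
  then show ?thesis using Dpos by simp
qed
lemma vp_vp: "dotp D vp vp = real D * Rv\<^sup>2"
proof -
  have e: "dotp D vp vp = dotp D v v - mv\<^sup>2 * real D"
  proof -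
    have "dotp D vp vp = dotp D v vp - mv * dotp D vs vp" by (simp add: vp_def[of ] dotp_diff_left)
    also have "dotp D vs vp = 0" using vp_vs by (simp add: dotp_comm)
    also have "dotp D v vp = dotp D v v - mv * dotp D v vs" by (simp add: vp_def dotp_diff_right)
    also have "dotp D v vs = mv * real D" using Dpos by (simp add: mv_def)
    finally show ?thesis by (simp add: power2_eq_square algebra_simps)
  qed
  have eq: "dotp D v v / D - mv\<^sup>2 = dotp D vp vp / D" using Dpos by (simp add: e field_simps)
  have nn: "dotp D vp vp / D \<ge> 0" using dotp_self_nonneg[of D vp] Dpos by simp
  have "Rv\<^sup>2 = dotp D vp vp / D" unfolding Rv_def eq using nn by simp
  then show ?thesis using Dpos by simp
qed

lemma Rk_nonneg: "Rk \<ge> 0"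
proof -
  have "Rk\<^sup>2 \<ge> 0" by simp
  have "dotp D k k / D - mk\<^sup>2 \<ge> 0"
  proof -
    have "dotp D kp kp = dotp D k k - mk\<^sup>2 * real D"
    proof -
      have "dotp D kp kp = dotp D k kp - mk * dotp D ks kp" by (simp add: kp_def[of ] dotp_diff_left)
      also have "dotp D ks kp = 0" using kp_ks by (simp add: dotp_comm)
      also have "dotp D k kp = dotp D k k - mk * dotp D k ks" by (simp add: kp_def dotp_diff_right)
      also have "dotp D k ks = mk * real D" using Dpos by (simp add: mk_def)
      finally show ?thesis by (simp add: power2_eq_square algebra_simps)
    qed
    then have "dotp D k k / D - mk\<^sup>2 = dotp D kp kp / D" using Dpos by (simp add: field_simps)
    then show ?thesis using dotp_self_nonneg[of D kp] Dpos by simp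
  qed
  then show ?thesis by (simp add: Rk_def)
qed
lemma Rv_nonneg: "Rv \<ge> 0"
proof -
  have "dotp D v v / D - mv\<^sup>2 \<ge> 0"
  proof -
    have "dotp D vp vp = dotp D v v - mv\<^sup>2 * real D"
    proof -
      have "dotp D vp vp = dotp D v vp - mv * dotp D vs vp" by (simp add: vp_def[of ] dotp_diff_left)
      also have "dotp D vs vp = 0" using vp_vs by (simp add: dotp_comm)
      also have "dotp D v vp = dotp D v v - mv * dotp D v vs" by (simp add: vp_def dotp_diff_right)
      also have "dotp D v vs = mv * real D" using Dpos by (simp add: mv_def)
      finally show ?thesis by (simp add: power2_eq_square algebra_simps)
    qed
    then have "dotp D v v / D - mv\<^sup>2 = dotp D vp vp / D" using Dpos by (simp add: field_simps)
    then show ?thesis using dotp_self_nonneg[of D vp] Dpos by simp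
  qed
  then show ?thesis by (simp add: Rv_def)
qed

lemma kp_zero: "Rk = 0 \<Longrightarrow> d < D \<Longrightarrow> kp d = 0"
  using kp_kp dotp_self_zero[of D kp d] by simp
lemma vp_zero: "Rv = 0 \<Longrightarrow> d < D \<Longrightarrow> vp d = 0"
  using vp_vp dotp_self_zero[of D vp d] by simp

definition "u t = (if t = (0::nat) then ks else if t = 1 then vs else if t = 2 then kp else vp)"
definition "cc t = (if t = (0::nat) then 1 / sD else if t = 1 then 1 / sD
   else if t = 2 then (if Rk = 0 then 0 else 1 / (sD * Rk)) else (if Rv = 0 then 0 else 1 / (sD * Rv)))"
definition "tl1 t = (if t = (2::nat) \<and> Rk = 0 then 1 else (0::real))"
definition "tl2 t = (if t = (3::nat) \<and> Rv = 0 then 1 else (0::real))"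
definition "e t d = (if d < D then cc t * u t d else if d = D then tl1 t else if d = Suc D then tl2 t else 0)"

lemma dot_e: "(\<Sum>d<D + 2. e t d * e t' d) = cc t * cc t' * dotp D (u t) (u t') + tl1 t * tl1 t' + tl2 t * tl2 t'"
proof -
  have "(\<Sum>d<D. e t d * e t' d) = cc t * cc t' * dotp D (u t) (u t')"
    by (simp add: e_def dotp_def sum_distrib_left algebra_simps)
  then show ?thesis by (simp add: sum_lessThan_add2 e_def)
qed

lemma orth_e: "t < 4 \<Longrightarrow> t' < 4 \<Longrightarrow> (\<Sum>d<D + 2. e t d * e t' d) = (if t = t' then 1 else 0)"
proof -
  assume t: "t < 4" and t': "t' < 4"
  have s1: "1 / sD * (1 / sD) * real D = 1" using sD_sq sD_pos D by (simp add: field_simps)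
  have s2: "1 / (sD * R) * (1 / (sD * R)) * (real D * R\<^sup>2) = 1" if "R \<noteq> 0" for R
    using sD_sq sD_pos that D by (simp add: field_simps power2_eq_square)
  have t4: "t = 0 \<or> t = 1 \<or> t = 2 \<or> t = 3" using t by auto
  have t4': "t' = 0 \<or> t' = 1 \<or> t' = 2 \<or> t' = 3" using t' by auto
  show ?thesis unfolding dot_e
    using t4 t4' s1 s2[of Rk] s2[of Rv] D
    by (auto simp: u_def cc_def tl1_def tl2_def ks_norm vs_norm ks_vs kp_ks kp_vs vp_vs vp_ks kp_vp kp_kp vp_vp
        dotp_comm[of D vs ks] dotp_comm[of D ks kp] dotp_comm[of D vs kp] dotp_comm[of D vs vp] dotp_comm[of D ks vp] dotp_comm[of D vp kp])
qed

lemma e_sum: "(\<Sum>d<D + 2. e t d * w d) = cc t * dotp D (u t) w + tl1 t * w D + tl2 t * w (Suc D)"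
proof -
  have "(\<Sum>d<D. e t d * w d) = cc t * dotp D (u t) w"
    by (simp add: e_def dotp_def sum_distrib_left algebra_simps)
  then show ?thesis by (simp add: sum_lessThan_add2 e_def)
qed

lemma frame_ks: "dotp D w ks / sD = (\<Sum>d<D + 2. e 0 d * w d)"
  unfolding e_sum by (simp add: u_def cc_def tl1_def tl2_def dotp_comm)
lemma frame_vs: "dotp D w vs / sD = (\<Sum>d<D + 2. e 1 d * w d)"
  unfolding e_sum by (simp add: u_def cc_def tl1_def tl2_def dotp_comm)
lemma frame_k: "dotp D w k / sD = mk * (\<Sum>d<D + 2. e 0 d * w d) + Rk * (\<Sum>d<D + 2. e 2 d * w d)"
proof (cases "Rk = 0")
  case True
  have "dotp D w k = mk * dotp D w ks"
  proof -
    have "dotp D w k = dotp D w (\<lambda>d. mk * ks d)"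
      unfolding dotp_def using kp_zero[OF True] by (intro sum.cong) (auto simp: kp_def)
    then show ?thesis by (simp add: dotp_def sum_distrib_left algebra_simps)
  qed
  then show ?thesis using True unfolding e_sum by (simp add: u_def cc_def tl1_def tl2_def dotp_comm)
next
  case False
  have "dotp D w k = mk * dotp D w ks + dotp D w kp"
    by (simp add: dotp_def kp_def sum_distrib_left algebra_simps sum.distrib sum_subtractf)
  then show ?thesis using False sD_pos unfolding e_sum
    by (simp add: u_def cc_def tl1_def tl2_def dotp_comm field_simps)
qed
lemma frame_v: "dotp D w v / sD = mv * (\<Sum>d<D + 2. e 1 d * w d) + Rv * (\<Sum>d<D + 2. e 3 d * w d)"
proof (cases "Rv = 0")
  case True
  have "dotp D w v = mv * dotp D w vs"
  proof -
    have "dotp D w v = dotp D w (\<lambda>d. mv * vs d)"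
      unfolding dotp_def using vp_zero[OF True] by (intro sum.cong) (auto simp: vp_def)
    then show ?thesis by (simp add: dotp_def sum_distrib_left algebra_simps)
  qed
  then show ?thesis using True unfolding e_sum by (simp add: u_def cc_def tl1_def tl2_def dotp_comm)
next
  case False
  have "dotp D w v = mv * dotp D w vs + dotp D w vp"
    by (simp add: dotp_def vp_def sum_distrib_left algebra_simps sum.distrib sum_subtractf)
  then show ?thesis using False sD_pos unfolding e_sum
    by (simp add: u_def cc_def tl1_def tl2_def dotp_comm field_simps)
qed

end


type_synonym jt = "(nat + nat) + (nat + nat)"

definition row :: "jt \<Rightarrow> nat" where
  "row j = (case j of Inl (Inl l) \<Rightarrow> l | Inl (Inr l) \<Rightarrow> l | Inr (Inl l) \<Rightarrow> l | Inr (Inr l) \<Rightarrow> l)"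
definition tyJ :: "jt \<Rightarrow> nat" where
  "tyJ j = (case j of Inl (Inl l) \<Rightarrow> 0 | Inl (Inr l) \<Rightarrow> 2 | Inr (Inl l) \<Rightarrow> 1 | Inr (Inr l) \<Rightarrow> 3)"
definition JJ :: "nat \<Rightarrow> jt set" where
  "JJ L = ({..<L} <+> {..<L}) <+> ({..<L} <+> {..<L})"

lemma row_tyJ_inj: "row j = row j' \<Longrightarrow> tyJ j = tyJ j' \<Longrightarrow> j = j'"
  by (cases j rule: sum.exhaust; cases j' rule: sum.exhaust)
     (auto simp: row_def tyJ_def split: sum.splits)

lemma JJ_row: "j \<in> JJ L \<Longrightarrow> row j < L"
  by (auto simp: JJ_def row_def)
lemma JJ_tyJ: "tyJ j < 4"
  by (auto simp: tyJ_def split: sum.splits)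
lemma finite_JJ: "finite (JJ L)" by (simp add: JJ_def)

context P4 begin

definition "II (L::nat) = {..<L} \<times> {..<D + 2}"
definition "cf j p = (if fst p = row j then e (tyJ j) (snd p) else 0)"

lemma finite_II: "finite (II L)" by (simp add: II_def)

lemma sum_II: "(\<Sum>p\<in>II L. F p) = (\<Sum>l<L. \<Sum>d<D + 2. F (l, d))"
  unfolding II_def sum.cartesian_product by (rule sum.cong) auto

lemma orthon_cf: "orthon (II L) (JJ L) cf"
  unfolding orthon_def
proof (intro ballI)
  fix j j' assume j: "j \<in> JJ L" and j': "j' \<in> JJ L"
  have "(\<Sum>p\<in>II L. cf j p * cf j' p) = (\<Sum>l<L. if l = row j then (if row j = row j' then (\<Sum>d<D + 2. e (tyJ j) d * e (tyJ j') d) else 0) else 0)"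
    unfolding sum_II by (intro sum.cong refl) (auto simp: cf_def)
  also have "\<dots> = (if row j = row j' then (\<Sum>d<D + 2. e (tyJ j) d * e (tyJ j') d) else 0)"
    using JJ_row[OF j] by (simp add: sum.delta)
  also have "\<dots> = (if j = j' then 1 else 0)"
    using orth_e[OF JJ_tyJ JJ_tyJ, of j j'] row_tyJ_inj[of j j'] by auto
  finally show "(\<Sum>p\<in>II L. cf j p * cf j' p) = (if j = j' then 1 else 0)" .
qed

lemma lin_cf: "j \<in> JJ L \<Longrightarrow> lin (II L) (JJ L) cf x j = (\<Sum>d<D + 2. e (tyJ j) d * x (row j, d))"
proof -
  assume j: "j \<in> JJ L"
  have "(\<Sum>p\<in>II L. cf j p * x p) = (\<Sum>l<L. if l = row j then (\<Sum>d<D + 2. e (tyJ j) d * x (row j, d)) else 0)"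
    unfolding sum_II by (intro sum.cong refl) (auto simp: cf_def)
  also have "\<dots> = (\<Sum>d<D + 2. e (tyJ j) d * x (row j, d))"
    using JJ_row[OF j] by (simp add: sum.delta)
  finally show ?thesis using j by (simp add: lin_def)
qed

definition "LHSf g \<sigma> L eps X = g L eps (proj L D X ks) * (proj L D X vs eps - model_out \<sigma> L D k v X)\<^sup>2"

definition "HY g \<sigma> L eps (Y :: jt \<Rightarrow> real) = g L eps (vec L (\<lambda>l. Y (Inl (Inl l)))) *
   (Y (Inr (Inl eps)) - (\<Sum>l<L. \<sigma> L (vec L (\<lambda>l. mk * Y (Inl (Inl l)) + Rk * Y (Inl (Inr l)))) l *
      (mv * Y (Inr (Inl l)) + Rv * Y (Inr (Inr l)))))\<^sup>2"

lemma vec_cong: "(\<And>l. l < L \<Longrightarrow> f l = f' l) \<Longrightarrow> vec L f = vec L f'"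
  by (auto simp: vec_def)

lemma ident:
  assumes eps: "eps < L"
  shows "LHSf g \<sigma> L eps (unflat {..<L} {..<D} x) = HY g \<sigma> L eps (lin (II L) (JJ L) cf x)"
proof -
  define w where "w l = (\<lambda>d. x (l, d))" for l
  let ?Y = "lin (II L) (JJ L) cf x"
  have dU: "dotp D (unflat {..<L} {..<D} x l) z = dotp D (w l) z" if "l < L" for l z
    using that by (simp add: unflat_def dotp_def w_def)
  have pU: "proj L D (unflat {..<L} {..<D} x) z = vec L (\<lambda>l. dotp D (w l) z / sD)" for z
    unfolding proj_def sD_def by (rule vec_cong) (simp add: dU)
  have Y0: "?Y (Inl (Inl l)) = (\<Sum>d<D + 2. e 0 d * w l d)" if "l < L" for l
    using that by (subst lin_cf) (auto simp: JJ_def row_def tyJ_def w_def)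
  have Y2: "?Y (Inl (Inr l)) = (\<Sum>d<D + 2. e 2 d * w l d)" if "l < L" for l
    using that by (subst lin_cf) (auto simp: JJ_def row_def tyJ_def w_def)
  have Y1: "?Y (Inr (Inl l)) = (\<Sum>d<D + 2. e 1 d * w l d)" if "l < L" for l
    using that by (subst lin_cf) (auto simp: JJ_def row_def tyJ_def w_def)
  have Y3: "?Y (Inr (Inr l)) = (\<Sum>d<D + 2. e 3 d * w l d)" if "l < L" for l
    using that by (subst lin_cf) (auto simp: JJ_def row_def tyJ_def w_def)
  have pks: "proj L D (unflat {..<L} {..<D} x) ks = vec L (\<lambda>l. ?Y (Inl (Inl l)))"
    unfolding pU by (rule vec_cong) (simp add: Y0 frame_ks)
  have pvs: "proj L D (unflat {..<L} {..<D} x) vs eps = ?Y (Inr (Inl eps))"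
    unfolding pU using eps by (simp add: vec_def Y1 frame_vs)
  have pk: "proj L D (unflat {..<L} {..<D} x) k = vec L (\<lambda>l. mk * ?Y (Inl (Inl l)) + Rk * ?Y (Inl (Inr l)))"
    unfolding pU by (rule vec_cong) (simp add: Y0 Y2 frame_k)
  have pv: "proj L D (unflat {..<L} {..<D} x) v l = mv * ?Y (Inr (Inl l)) + Rv * ?Y (Inr (Inr l))" if "l < L" for l
    unfolding pU using that by (simp add: vec_def Y1 Y3 frame_v)
  have mo: "model_out \<sigma> L D k v (unflat {..<L} {..<D} x) =
     (\<Sum>l<L. \<sigma> L (vec L (\<lambda>l. mk * ?Y (Inl (Inl l)) + Rk * ?Y (Inl (Inr l)))) l * (mv * ?Y (Inr (Inl l)) + Rv * ?Y (Inr (Inr l))))"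
    unfolding model_out_def pk by (intro sum.cong refl) (simp add: pv)
  show ?thesis unfolding LHSf_def HY_def pks pvs mo ..
qed

end


lemma meas_vec:
  assumes "\<And>l. l < L \<Longrightarrow> (\<lambda>y. F y l) \<in> borel_measurable M"
  shows "(\<lambda>y. vec L (F y)) \<in> measurable M (borel_vec L)"
  unfolding vec_def borel_vec_def by (rule measurable_restrict) (use assms in auto)

lemma meas_coord: "j \<in> K \<Longrightarrow> (\<lambda>y. y j) \<in> borel_measurable (gI K)"
proof -
  assume j: "j \<in> K"
  have "(\<lambda>y. y j) \<in> measurable (gI K) std_gauss"
    unfolding gI_def by (rule measurable_component_singleton[OF j])
  then show ?thesis by (subst (asm) measurable_cong_sets[OF refl sets_std_gauss])
qed

lemma meas_coord2: "l \<in> A \<Longrightarrow> d \<in> B \<Longrightarrow> (\<lambda>X. X l d) \<in> borel_measurable (PiM A (\<lambda>_. gI B))"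
proof -
  assume l: "l \<in> A" and d: "d \<in> B"
  have "(\<lambda>X. X l) \<in> measurable (PiM A (\<lambda>_. gI B)) (gI B)"
    by (rule measurable_component_singleton[OF l])
  from measurable_compose[OF this meas_coord[OF d]] show ?thesis .
qed

locale P4m = P4 +
  fixes g :: "nat \<Rightarrow> nat \<Rightarrow> (nat \<Rightarrow> real) \<Rightarrow> real"
    and \<sigma> :: "nat \<Rightarrow> (nat \<Rightarrow> real) \<Rightarrow> (nat \<Rightarrow> real)"
  assumes g_meas: "\<And>L eps. eps < L \<Longrightarrow> g L eps \<in> borel_measurable (borel_vec L)"
    and g_nonneg: "\<And>L eps x. eps < L \<Longrightarrow> g L eps x \<ge> 0"
    and \<sigma>_meas: "\<And>L l. l < L \<Longrightarrow> (\<lambda>x. \<sigma> L x l) \<in> borel_measurable (borel_vec L)"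
begin

lemma meas_Phi:
  fixes L eps :: nat and P1 P2 P3 P4 :: "'a \<Rightarrow> nat \<Rightarrow> real"
  assumes eps: "eps < L"
    and P1: "\<And>l. l < L \<Longrightarrow> (\<lambda>y. P1 y l) \<in> borel_measurable M"
    and P2: "\<And>l. l < L \<Longrightarrow> (\<lambda>y. P2 y l) \<in> borel_measurable M"
    and P3: "\<And>l. l < L \<Longrightarrow> (\<lambda>y. P3 y l) \<in> borel_measurable M"
    and P4: "\<And>l. l < L \<Longrightarrow> (\<lambda>y. P4 y l) \<in> borel_measurable M"
  shows "(\<lambda>y. g L eps (vec L (P1 y)) * (P2 y eps - (\<Sum>l<L. \<sigma> L (vec L (P3 y)) l * P4 y l))\<^sup>2) \<in> borel_measurable M"
proof -
  have m1: "(\<lambda>y. g L eps (vec L (P1 y))) \<in> borel_measurable M"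
    by (rule measurable_compose[OF meas_vec[OF P1] g_meas[OF eps]])
  have m3: "(\<lambda>y. \<sigma> L (vec L (P3 y)) l) \<in> borel_measurable M" if "l < L" for l
    by (rule measurable_compose[OF meas_vec[OF P3] \<sigma>_meas[OF that]])
  have ms: "(\<lambda>y. \<Sum>l<L. \<sigma> L (vec L (P3 y)) l * P4 y l) \<in> borel_measurable M"
    by (rule borel_measurable_sum) (simp add: borel_measurable_times m3 P4)
  show ?thesis
    by (intro borel_measurable_times borel_measurable_power borel_measurable_diff m1 ms P2 eps)
qed

lemma meas_HY:
  assumes eps: "eps < L"
  shows "HY g \<sigma> L eps \<in> borel_measurable (gI (JJ L))"
proof -
  have c: "(\<lambda>y. y j) \<in> borel_measurable (gI (JJ L))" if "j \<in> JJ L" for j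
    using meas_coord[OF that] .
  define P1 where "P1 = (\<lambda>(Y :: jt \<Rightarrow> real) l. Y (Inl (Inl l)))"
  define P2 where "P2 = (\<lambda>(Y :: jt \<Rightarrow> real) l. Y (Inr (Inl l)))"
  define P3 where "P3 = (\<lambda>(Y :: jt \<Rightarrow> real) l. mk * Y (Inl (Inl l)) + Rk * Y (Inl (Inr l)))"
  define P4 where "P4 = (\<lambda>(Y :: jt \<Rightarrow> real) l. mv * Y (Inr (Inl l)) + Rv * Y (Inr (Inr l)))"
  have e: "HY g \<sigma> L eps = (\<lambda>Y. g L eps (vec L (P1 Y)) * (P2 Y eps - (\<Sum>l<L. \<sigma> L (vec L (P3 Y)) l * P4 Y l))\<^sup>2)"
    by (simp add: HY_def fun_eq_iff P1_def P2_def P3_def P4_def)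
  have m1: "(\<lambda>y. P1 y l) \<in> borel_measurable (gI (JJ L))" if "l < L" for l
    unfolding P1_def using that by (intro c) (auto simp: JJ_def)
  have m2: "(\<lambda>y. P2 y l) \<in> borel_measurable (gI (JJ L))" if "l < L" for l
    unfolding P2_def using that by (intro c) (auto simp: JJ_def)
  have m3: "(\<lambda>y. P3 y l) \<in> borel_measurable (gI (JJ L))" if "l < L" for l
    unfolding P3_def using that by (intro borel_measurable_add borel_measurable_times borel_measurable_const c) (auto simp: JJ_def)
  have m4: "(\<lambda>y. P4 y l) \<in> borel_measurable (gI (JJ L))" if "l < L" for l
    unfolding P4_def using that by (intro borel_measurable_add borel_measurable_times borel_measurable_const c) (auto simp: JJ_def)
  show ?thesis unfolding e by (rule meas_Phi[OF eps m1 m2 m3 m4])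
qed

lemma meas_LHSf:
  assumes eps: "eps < L"
  shows "LHSf g \<sigma> L eps \<in> borel_measurable (PiM {..<L} (\<lambda>_. gI {..<D}))"
proof -
  define P where "P w X l = dotp D (X l) w / sqrt (real D)" for w and X :: "nat \<Rightarrow> nat \<Rightarrow> real" and l
  have mP: "(\<lambda>X. P w X l) \<in> borel_measurable (PiM {..<L} (\<lambda>_. gI {..<D}))" if "l < L" for w l
    unfolding P_def dotp_def
    by (intro borel_measurable_divide borel_measurable_sum borel_measurable_times meas_coord2) (use that in auto)
  have e: "LHSf g \<sigma> L eps = (\<lambda>X. g L eps (vec L (P ks X)) * (P vs X eps - (\<Sum>l<L. \<sigma> L (vec L (P k X)) l * P v X l))\<^sup>2)"
  proof -
    have "model_out \<sigma> L D k v X = (\<Sum>l<L. \<sigma> L (vec L (P k X)) l * P v X l)" for X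
      unfolding model_out_def proj_def P_def by (intro sum.cong refl) (simp add: vec_def)
    then show ?thesis using eps unfolding LHSf_def proj_def P_def fun_eq_iff by (simp add: vec_def)
  qed
  show ?thesis unfolding e by (rule meas_Phi[OF eps mP mP mP mP])
qed

end


lemma meas_unflat: "unflat A B \<in> measurable (gI (A \<times> B)) (PiM A (\<lambda>_. gI B))"
  unfolding unflat_def gI_def by (intro measurable_restrict) (auto intro!: measurable_component_singleton)

context P4m begin

lemma chain1:
  assumes eps: "eps < L"
  shows "(\<integral>\<^sup>+X. ennreal (LHSf g \<sigma> L eps X) \<partial>PiM {..<L} (\<lambda>_. gI {..<D}))
       = (\<integral>\<^sup>+Y. ennreal (HY g \<sigma> L eps Y) \<partial>gI (JJ L))"
proof -
  let ?A = "{..<L}" and ?B = "{..<D}"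
  have mL: "(\<lambda>X. ennreal (LHSf g \<sigma> L eps X)) \<in> borel_measurable (PiM ?A (\<lambda>_. gI ?B))"
    using meas_LHSf[OF eps] by measurable
  have mH: "(\<lambda>Y. ennreal (HY g \<sigma> L eps Y)) \<in> borel_measurable (gI (JJ L))"
    using meas_HY[OF eps] by measurable
  have mL2: "(\<lambda>x. ennreal (LHSf g \<sigma> L eps (unflat ?A ?B x))) \<in> borel_measurable (gI (?A \<times> ?B))"
    using measurable_compose[OF meas_unflat mL] .
  have "(\<integral>\<^sup>+X. ennreal (LHSf g \<sigma> L eps X) \<partial>PiM ?A (\<lambda>_. gI ?B))
      = (\<integral>\<^sup>+x. ennreal (LHSf g \<sigma> L eps (unflat ?A ?B x)) \<partial>gI (?A \<times> ?B))"
    by (rule NF[OF _ _ mL]) auto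
  also have "\<dots> = (\<integral>\<^sup>+x. ennreal (LHSf g \<sigma> L eps (unflat ?A ?B (restrict x (?A \<times> ?B)))) \<partial>gI (II L))"
    by (rule restrict_gI[OF finite_II _ mL2]) (auto simp: II_def)
  also have "\<dots> = (\<integral>\<^sup>+x. ennreal (HY g \<sigma> L eps (lin (II L) (JJ L) cf x)) \<partial>gI (II L))"
  proof (rule nn_integral_cong)
    fix x :: "nat \<times> nat \<Rightarrow> real"
    have "unflat ?A ?B (restrict x (?A \<times> ?B)) = unflat ?A ?B x" by (auto simp: unflat_def fun_eq_iff)
    then show "ennreal (LHSf g \<sigma> L eps (unflat ?A ?B (restrict x (?A \<times> ?B)))) = ennreal (HY g \<sigma> L eps (lin (II L) (JJ L) cf x))"
      by (simp add: ident[OF eps])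
  qed
  also have "\<dots> = (\<integral>\<^sup>+Y. ennreal (HY g \<sigma> L eps Y) \<partial>gI (JJ L))"
    by (rule PL[OF finite_II finite_JJ orthon_cf mH])
  finally show ?thesis .
qed

definition "sv L chi xi = \<sigma> L (vec L (\<lambda>l. mk * chi l + Rk * xi l))"
definition "Hs L eps chi xi = g L eps chi * (1 - 2 * mv * sv L chi xi eps + (mv\<^sup>2 + Rv\<^sup>2) * (\<Sum>l<L. sv L chi xi l * sv L chi xi l))"

lemma meas_sv:
  assumes l: "l < L"
    and c: "\<And>l. l < L \<Longrightarrow> (\<lambda>y. C y l) \<in> borel_measurable M"
    and x: "\<And>l. l < L \<Longrightarrow> (\<lambda>y. X y l) \<in> borel_measurable M"
  shows "(\<lambda>y. sv L (C y) (X y) l) \<in> borel_measurable M"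
  unfolding sv_def
  by (rule measurable_compose[OF meas_vec \<sigma>_meas[OF l]])
     (intro borel_measurable_add borel_measurable_times borel_measurable_const c x; simp)

lemma gI_borel_vec: assumes "f \<in> measurable M (gI {..<L})" shows "f \<in> measurable M (borel_vec L)"
  using assms unfolding borel_vec_def by (subst (asm) measurable_cong_sets[OF refl sets_gI])

lemma Hs_nonneg:
  assumes eps: "eps < L"
  shows "Hs L eps chi xi \<ge> 0"
proof -
  let ?s = "sv L chi xi"
  have "(\<Sum>l<L. ?s l * ?s l) \<ge> ?s eps * ?s eps"
  proof -
    have "(\<Sum>l<L. ?s l * ?s l) = ?s eps * ?s eps + (\<Sum>l\<in>{..<L} - {eps}. ?s l * ?s l)"
      using eps by (simp add: sum.remove)
    moreover have "(\<Sum>l\<in>{..<L} - {eps}. ?s l * ?s l) \<ge> 0" by (intro sum_nonneg) simp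
    ultimately show ?thesis by simp
  qed
  then have "(mv\<^sup>2 + Rv\<^sup>2) * (\<Sum>l<L. ?s l * ?s l) \<ge> mv\<^sup>2 * (?s eps * ?s eps)"
    by (intro mult_mono) auto
  moreover have "1 - 2 * mv * ?s eps + mv\<^sup>2 * (?s eps * ?s eps) = (1 - mv * ?s eps)\<^sup>2"
    by (simp add: power2_eq_square algebra_simps)
  ultimately have "1 - 2 * mv * ?s eps + (mv\<^sup>2 + Rv\<^sup>2) * (\<Sum>l<L. ?s l * ?s l) \<ge> 0"
    by (smt (verit) zero_le_power2)
  then show ?thesis unfolding Hs_def using g_nonneg[OF eps] by simp
qed

lemma meas_Hs:
  assumes eps: "eps < L"
  shows "(\<lambda>(chi, xi). Hs L eps chi xi) \<in> borel_measurable (gI {..<L} \<Otimes>\<^sub>M gI {..<L})"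
proof -
  have cf: "(\<lambda>p. fst p l) \<in> borel_measurable (gI {..<L} \<Otimes>\<^sub>M gI {..<L})" if "l < L" for l
    using measurable_compose[OF measurable_fst meas_coord[of l "{..<L}"]] that by simp
  have cs: "(\<lambda>p. snd p l) \<in> borel_measurable (gI {..<L} \<Otimes>\<^sub>M gI {..<L})" if "l < L" for l
    using measurable_compose[OF measurable_snd meas_coord[of l "{..<L}"]] that by simp
  have ms: "(\<lambda>p. sv L (fst p) (snd p) l) \<in> borel_measurable (gI {..<L} \<Otimes>\<^sub>M gI {..<L})" if "l < L" for l
    by (rule meas_sv[OF that cf cs])
  have mg: "(\<lambda>p. g L eps (fst p)) \<in> borel_measurable (gI {..<L} \<Otimes>\<^sub>M gI {..<L})"
    by (rule measurable_compose[OF gI_borel_vec[OF measurable_fst] g_meas[OF eps]])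
  have e: "(\<lambda>(chi, xi). Hs L eps chi xi) = (\<lambda>p. g L eps (fst p) * (1 - 2 * mv * sv L (fst p) (snd p) eps + (mv\<^sup>2 + Rv\<^sup>2) * (\<Sum>l<L. sv L (fst p) (snd p) l * sv L (fst p) (snd p) l)))"
    by (auto simp: Hs_def fun_eq_iff)
  show ?thesis unfolding e
    by (intro borel_measurable_times borel_measurable_add borel_measurable_diff borel_measurable_const
        borel_measurable_sum mg ms eps) auto
qed

end


lemma in_Plus[simp]: "Inl x \<in> A <+> B \<longleftrightarrow> x \<in> A" "Inr y \<in> A <+> B \<longleftrightarrow> y \<in> B"
  by auto

context P4m begin

definition "G1 L eps (y1 :: nat + nat \<Rightarrow> real) = g L eps (vec L (\<lambda>l. y1 (Inl l))) *
   (1 - 2 * mv * sv L (\<lambda>l. y1 (Inl l)) (\<lambda>l. y1 (Inr l)) eps + (mv\<^sup>2 + Rv\<^sup>2) *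
      (\<Sum>l<L. sv L (\<lambda>l. y1 (Inl l)) (\<lambda>l. y1 (Inr l)) l * sv L (\<lambda>l. y1 (Inl l)) (\<lambda>l. y1 (Inr l)) l))"

lemma sv_cong: "(\<And>l. l < L \<Longrightarrow> C l = C' l) \<Longrightarrow> (\<And>l. l < L \<Longrightarrow> X l = X' l) \<Longrightarrow> sv L C X = sv L C' X'"
  unfolding sv_def by (rule arg_cong[where f = "\<sigma> L"]) (rule vec_cong, simp)

lemma inner:
  assumes eps: "eps < L"
  shows "(\<integral>\<^sup>+y2. ennreal (HY g \<sigma> L eps (comb ({..<L} <+> {..<L}) ({..<L} <+> {..<L}) y1 y2)) \<partial>gI ({..<L} <+> {..<L}))
       = ennreal (G1 L eps y1)"
proof -
  let ?A2 = "{..<L} <+> {..<L}"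
  let ?s = "sv L (\<lambda>l. y1 (Inl l)) (\<lambda>l. y1 (Inr l))"
  let ?G = "g L eps (vec L (\<lambda>l. y1 (Inl l)))"
  define \<gamma> where "\<gamma> j = (case j of Inl l \<Rightarrow> (if l = eps then 1 else 0) - mv * ?s l | Inr l \<Rightarrow> - (Rv * ?s l))" for j
  have Gnn: "?G \<ge> 0" using g_nonneg[OF eps] .
  have Q: "HY g \<sigma> L eps (comb ?A2 ?A2 y1 y2) = ?G * (\<Sum>j\<in>?A2. \<gamma> j * y2 j)\<^sup>2" for y2
  proof -
    let ?c = "comb ?A2 ?A2 y1 y2"
    have v1: "vec L (\<lambda>l. ?c (Inl (Inl l))) = vec L (\<lambda>l. y1 (Inl l))"
      by (rule vec_cong) (simp add: comb_def)
    have v2: "\<sigma> L (vec L (\<lambda>l. mk * ?c (Inl (Inl l)) + Rk * ?c (Inl (Inr l)))) = ?s"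
      unfolding sv_def[symmetric] by (rule sv_cong) (simp_all add: comb_def)
    have "(\<Sum>j\<in>?A2. \<gamma> j * y2 j) = (\<Sum>l<L. ((if l = eps then 1 else 0) - mv * ?s l) * y2 (Inl l)) + (\<Sum>l<L. - (Rv * ?s l) * y2 (Inr l))"
      by (simp add: sum.Plus \<gamma>_def comp_def)
    also have "\<dots> = y2 (Inl eps) - (\<Sum>l<L. ?s l * (mv * y2 (Inl l) + Rv * y2 (Inr l)))"
    proof -
      have d: "((if l = eps then 1 else 0) - mv * ?s l) * y2 (Inl l) = (if l = eps then y2 (Inl l) else 0) - mv * ?s l * y2 (Inl l)" for l
        by (simp add: algebra_simps)
      have a: "(\<Sum>l<L. ((if l = eps then 1 else 0) - mv * ?s l) * y2 (Inl l)) = y2 (Inl eps) - (\<Sum>l<L. mv * ?s l * y2 (Inl l))"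
        using eps by (simp only: d sum_subtractf) simp
      have b: "(\<Sum>l<L. - (Rv * ?s l) * y2 (Inr l)) = - (\<Sum>l<L. Rv * ?s l * y2 (Inr l))"
        by (simp add: sum_negf)
      have c: "(\<Sum>l<L. ?s l * (mv * y2 (Inl l) + Rv * y2 (Inr l))) = (\<Sum>l<L. mv * ?s l * y2 (Inl l)) + (\<Sum>l<L. Rv * ?s l * y2 (Inr l))"
        by (simp add: algebra_simps sum.distrib)
      show ?thesis unfolding a b c by simp
    qed
    also have "\<dots> = ?c (Inr (Inl eps)) - (\<Sum>l<L. ?s l * (mv * ?c (Inr (Inl l)) + Rv * ?c (Inr (Inr l))))"
      using eps by (simp add: comb_def)
    finally show ?thesis unfolding HY_def v1 v2 by simp
  qed
  have mQ: "(\<lambda>y2. ennreal ((\<Sum>j\<in>?A2. \<gamma> j * y2 j)\<^sup>2)) \<in> borel_measurable (gI ?A2)"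
  proof -
    have "(\<lambda>y2. (\<Sum>j\<in>?A2. \<gamma> j * y2 j)\<^sup>2) \<in> borel_measurable (gI ?A2)"
      by (intro borel_measurable_power borel_measurable_sum borel_measurable_times borel_measurable_const meas_coord)
    then show ?thesis by measurable
  qed
  have "(\<Sum>j\<in>?A2. (\<gamma> j)\<^sup>2) = (\<Sum>l<L. ((if l = eps then 1 else 0) - mv * ?s l)\<^sup>2) + (\<Sum>l<L. (Rv * ?s l)\<^sup>2)"
    by (simp add: sum.Plus \<gamma>_def comp_def)
  also have "\<dots> = 1 - 2 * mv * ?s eps + (mv\<^sup>2 + Rv\<^sup>2) * (\<Sum>l<L. ?s l * ?s l)"
  proof -
    have "((if l = eps then 1 else 0) - mv * ?s l)\<^sup>2 = (if l = eps then 1 - 2 * mv * ?s l else 0) + mv\<^sup>2 * (?s l * ?s l)" for l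
      by (simp add: power2_eq_square algebra_simps)
    then have "(\<Sum>l<L. ((if l = eps then 1 else 0) - mv * ?s l)\<^sup>2) = (1 - 2 * mv * ?s eps) + mv\<^sup>2 * (\<Sum>l<L. ?s l * ?s l)"
      using eps by (simp add: sum.distrib sum_distrib_left sum.delta)
    moreover have "(\<Sum>l<L. (Rv * ?s l)\<^sup>2) = Rv\<^sup>2 * (\<Sum>l<L. ?s l * ?s l)"
      by (simp add: power2_eq_square sum_distrib_left algebra_simps)
    ultimately show ?thesis by (simp add: algebra_simps)
  qed
  finally have SG: "(\<Sum>j\<in>?A2. (\<gamma> j)\<^sup>2) = 1 - 2 * mv * ?s eps + (mv\<^sup>2 + Rv\<^sup>2) * (\<Sum>l<L. ?s l * ?s l)" .
  have "(\<integral>\<^sup>+y2. ennreal (HY g \<sigma> L eps (comb ?A2 ?A2 y1 y2)) \<partial>gI ?A2)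
     = (\<integral>\<^sup>+y2. ennreal ?G * ennreal ((\<Sum>j\<in>?A2. \<gamma> j * y2 j)\<^sup>2) \<partial>gI ?A2)"
    by (simp add: Q ennreal_mult Gnn)
  also have "\<dots> = ennreal ?G * (\<integral>\<^sup>+y2. ennreal ((\<Sum>j\<in>?A2. \<gamma> j * y2 j)\<^sup>2) \<partial>gI ?A2)"
    by (rule nn_integral_cmult[OF mQ])
  also have "\<dots> = ennreal ?G * ennreal (\<Sum>j\<in>?A2. (\<gamma> j)\<^sup>2)"
    by (simp add: E2)
  also have "\<dots> = ennreal (G1 L eps y1)"
    unfolding G1_def SG[symmetric] using Gnn by (subst ennreal_mult) (auto intro: sum_nonneg)
  finally show ?thesis .
qed

lemma meas_G1:
  assumes eps: "eps < L"
  shows "G1 L eps \<in> borel_measurable (gI ({..<L} <+> {..<L}))"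
proof -
  let ?M = "gI ({..<L} <+> {..<L})"
  have c1: "(\<lambda>y. y (Inl l)) \<in> borel_measurable ?M" if "l < L" for l
    using that by (intro meas_coord) auto
  have c2: "(\<lambda>y. y (Inr l)) \<in> borel_measurable ?M" if "l < L" for l
    using that by (intro meas_coord) auto
  have ms: "(\<lambda>y. sv L (\<lambda>l. y (Inl l)) (\<lambda>l. y (Inr l)) l) \<in> borel_measurable ?M" if "l < L" for l
    by (rule meas_sv[OF that c1 c2])
  have mg: "(\<lambda>y. g L eps (vec L (\<lambda>l. y (Inl l)))) \<in> borel_measurable ?M"
    by (rule measurable_compose[OF meas_vec[OF c1] g_meas[OF eps]])
  have e: "G1 L eps = (\<lambda>y. g L eps (vec L (\<lambda>l. y (Inl l))) *
   (1 - 2 * mv * sv L (\<lambda>l. y (Inl l)) (\<lambda>l. y (Inr l)) eps + (mv\<^sup>2 + Rv\<^sup>2) *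
      (\<Sum>l<L. sv L (\<lambda>l. y (Inl l)) (\<lambda>l. y (Inr l)) l * sv L (\<lambda>l. y (Inl l)) (\<lambda>l. y (Inr l)) l)))"
    by (simp add: G1_def fun_eq_iff)
  show ?thesis unfolding e
    by (intro borel_measurable_times borel_measurable_add borel_measurable_diff borel_measurable_const
        borel_measurable_sum mg ms eps) auto
qed

lemma chain2:
  assumes eps: "eps < L"
  shows "(\<integral>\<^sup>+Y. ennreal (HY g \<sigma> L eps Y) \<partial>gI (JJ L))
       = (\<integral>\<^sup>+p. ennreal (Hs L eps (fst p) (snd p)) \<partial>(gI {..<L} \<Otimes>\<^sub>M gI {..<L}))"
proof -
  let ?A = "{..<L}" let ?A2 = "{..<L} <+> {..<L}"
  have mH: "(\<lambda>Y. ennreal (HY g \<sigma> L eps Y)) \<in> borel_measurable (gI (?A2 <+> ?A2))"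
    using meas_HY[OF eps] unfolding JJ_def by measurable
  have mG: "(\<lambda>y. ennreal (G1 L eps y)) \<in> borel_measurable (gI (?A <+> ?A))"
    using meas_G1[OF eps] by measurable
  have "(\<integral>\<^sup>+Y. ennreal (HY g \<sigma> L eps Y) \<partial>gI (JJ L))
      = (\<integral>\<^sup>+y1. \<integral>\<^sup>+y2. ennreal (HY g \<sigma> L eps (comb ?A2 ?A2 y1 y2)) \<partial>gI ?A2 \<partial>gI ?A2)"
    unfolding JJ_def by (rule SUM[OF _ _ mH]) auto
  also have "\<dots> = (\<integral>\<^sup>+y1. ennreal (G1 L eps y1) \<partial>gI ?A2)"
    by (simp add: inner[OF eps])
  also have "\<dots> = (\<integral>\<^sup>+chi. \<integral>\<^sup>+xi. ennreal (G1 L eps (comb ?A ?A chi xi)) \<partial>gI ?A \<partial>gI ?A)"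
    by (rule SUM[OF _ _ mG]) auto
  also have "\<dots> = (\<integral>\<^sup>+chi. \<integral>\<^sup>+xi. ennreal (Hs L eps chi xi) \<partial>gI ?A \<partial>gI ?A)"
  proof (rule nn_integral_cong)
    fix chi assume chi: "chi \<in> space (gI ?A)"
    have vc: "vec L chi = chi" using chi by (auto simp: vec_def space_gI PiE_iff extensional_def fun_eq_iff)
    have "G1 L eps (comb ?A ?A chi xi) = Hs L eps chi xi" for xi
    proof -
      have v: "vec L (\<lambda>l. comb ?A ?A chi xi (Inl l)) = chi"
        using chi by (auto simp: vec_def comb_def space_gI PiE_iff extensional_def fun_eq_iff)
      have s: "sv L (\<lambda>l. comb ?A ?A chi xi (Inl l)) (\<lambda>l. comb ?A ?A chi xi (Inr l)) = sv L chi xi"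
        by (rule sv_cong) (simp_all add: comb_def)
      show ?thesis unfolding G1_def Hs_def v s ..
    qed
    then show "(\<integral>\<^sup>+xi. ennreal (G1 L eps (comb ?A ?A chi xi)) \<partial>gI ?A) = (\<integral>\<^sup>+xi. ennreal (Hs L eps chi xi) \<partial>gI ?A)"
      by simp
  qed
  also have "\<dots> = (\<integral>\<^sup>+p. ennreal (Hs L eps (fst p) (snd p)) \<partial>(gI ?A \<Otimes>\<^sub>M gI ?A))"
  proof -
    interpret sA: sigma_finite_measure "gI ?A" by (rule sigma_finite_gI)
    have m: "(\<lambda>p. ennreal (Hs L eps (fst p) (snd p))) \<in> borel_measurable (gI ?A \<Otimes>\<^sub>M gI ?A)"
      using meas_Hs[OF eps] by (simp add: case_prod_beta')
    show ?thesis using sA.nn_integral_fst[OF m] by simp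
  qed
  finally show ?thesis .
qed

end


theorem proposition4:
  fixes D Lbar :: nat
    and PL :: "nat pmf"
    and g :: "nat \<Rightarrow> nat \<Rightarrow> (nat \<Rightarrow> real) \<Rightarrow> real"
    and \<sigma> :: "nat \<Rightarrow> (nat \<Rightarrow> real) \<Rightarrow> (nat \<Rightarrow> real)"
    and ks vs k v :: "nat \<Rightarrow> real"
  assumes D: "D \<ge> 1" and Lbar: "Lbar \<ge> 1"
    and PL: "set_pmf PL \<subseteq> {1..Lbar}"
    and g_meas: "\<And>L eps. eps < L \<Longrightarrow> g L eps \<in> borel_measurable (borel_vec L)"
    and g_nonneg: "\<And>L eps x. eps < L \<Longrightarrow> g L eps x \<ge> 0"
    and g_norm: "\<And>L eps. eps < L \<Longrightarrow> (\<integral>chi. g L eps chi \<partial>gauss_vec L) = 1"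
    and \<sigma>_meas: "\<And>L l. l < L \<Longrightarrow> (\<lambda>x. \<sigma> L x l) \<in> borel_measurable (borel_vec L)"
    and ks_norm: "dotp D ks ks = real D" and vs_norm: "dotp D vs vs = real D"
    and ks_vs: "dotp D ks vs = 0"
    and k_vs: "dotp D k vs = 0" and v_ks: "dotp D v ks = 0" and k_v: "dotp D k v = 0"
    and fin_lhs: "\<And>L eps. L \<in> set_pmf PL \<Longrightarrow> eps < L \<Longrightarrow>
        integrable (data_X g L D ks eps) (\<lambda>X. (proj L D X vs eps - model_out \<sigma> L D k v X)\<^sup>2)"
    and fin_rhs: "\<And>L eps. L \<in> set_pmf PL \<Longrightarrow> eps < L \<Longrightarrow>
        integrable (gauss_vec L \<Otimes>\<^sub>M gauss_vec L) (\<lambda>(chi, xi).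
          (let m_kk = dotp D k ks / D; m_vv = dotp D v vs / D;
               R_kk = sqrt (dotp D k k / D - m_kk\<^sup>2); R_vv = sqrt (dotp D v v / D - m_vv\<^sup>2);
               s = \<sigma> L (vec L (\<lambda>l. m_kk * chi l + R_kk * xi l))
           in g L eps chi * (1 - 2 * m_vv * s eps + (m_vv\<^sup>2 + R_vv\<^sup>2) * (\<Sum>l<L. s l * s l))))"
  shows "risk PL g \<sigma> D ks vs k v =
     measure_pmf.expectation PL (\<lambda>L.
       measure_pmf.expectation (pmf_of_set {..<L}) (\<lambda>eps.
         \<integral>(chi, xi). (let m_kk = dotp D k ks / D; m_vv = dotp D v vs / D;
               R_kk = sqrt (dotp D k k / D - m_kk\<^sup>2); R_vv = sqrt (dotp D v v / D - m_vv\<^sup>2);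
               s = \<sigma> L (vec L (\<lambda>l. m_kk * chi l + R_kk * xi l))
           in g L eps chi * (1 - 2 * m_vv * s eps + (m_vv\<^sup>2 + R_vv\<^sup>2) * (\<Sum>l<L. s l * s l)))
         \<partial>(gauss_vec L \<Otimes>\<^sub>M gauss_vec L)))"
proof -
  interpret P: P4m D ks vs k v g \<sigma>
    by unfold_locales (use D ks_norm vs_norm ks_vs k_vs v_ks k_v g_meas g_nonneg \<sigma>_meas in auto)
  have gm: "gauss_mat L D = PiM {..<L} (\<lambda>_. gI {..<D})" for L
    by (simp add: gauss_mat_def gauss_vec_def gI_def)
  have gv: "gauss_vec L = gI {..<L}" for L
    by (simp add: gauss_vec_def gI_def)
  have per: "(\<integral>X. (proj L D X vs eps - model_out \<sigma> L D k v X)\<^sup>2 \<partial>data_X g L D ks eps) =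
      (\<integral>(chi, xi). (let m_kk = dotp D k ks / D; m_vv = dotp D v vs / D;
               R_kk = sqrt (dotp D k k / D - m_kk\<^sup>2); R_vv = sqrt (dotp D v v / D - m_vv\<^sup>2);
               s = \<sigma> L (vec L (\<lambda>l. m_kk * chi l + R_kk * xi l))
           in g L eps chi * (1 - 2 * m_vv * s eps + (m_vv\<^sup>2 + R_vv\<^sup>2) * (\<Sum>l<L. s l * s l)))
         \<partial>(gauss_vec L \<Otimes>\<^sub>M gauss_vec L))" if eps: "eps < L" for L eps
  proof -
    have mL: "P.LHSf g \<sigma> L eps \<in> borel_measurable (gauss_mat L D)"
      unfolding gm by (rule P.meas_LHSf[OF eps])
    have mF: "(\<lambda>X. (proj L D X vs eps - model_out \<sigma> L D k v X)\<^sup>2) \<in> borel_measurable (gauss_mat L D)"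
    proof -
      define P where "P w X l = dotp D (X l) w / sqrt (real D)" for w and X :: "nat \<Rightarrow> nat \<Rightarrow> real" and l
      have mP: "(\<lambda>X. P w X l) \<in> borel_measurable (gauss_mat L D)" if "l < L" for w l
        unfolding P_def dotp_def gm
        by (intro borel_measurable_divide borel_measurable_sum borel_measurable_times meas_coord2) (use that in auto)
      have ms: "(\<lambda>X. \<sigma> L (proj L D X k) l) \<in> borel_measurable (gauss_mat L D)" if "l < L" for l
        unfolding proj_def P_def[symmetric] by (rule measurable_compose[OF meas_vec[OF mP] \<sigma>_meas[OF that]])
      have e1: "proj L D X vs eps = P vs X eps" for X using eps by (simp add: proj_def P_def vec_def)
      have e2: "model_out \<sigma> L D k v X = (\<Sum>l<L. \<sigma> L (proj L D X k) l * P v X l)" for X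
        unfolding model_out_def by (intro sum.cong refl) (simp add: proj_def P_def vec_def)
      show ?thesis unfolding e1 e2
        by (intro borel_measurable_power borel_measurable_diff borel_measurable_sum borel_measurable_times mP ms eps) auto
    qed
    have mg: "(\<lambda>X. g L eps (proj L D X ks)) \<in> borel_measurable (gauss_mat L D)"
    proof -
      have "(\<lambda>X. proj L D X ks) \<in> measurable (gauss_mat L D) (borel_vec L)"
        unfolding proj_def gm dotp_def
        by (rule meas_vec) (intro borel_measurable_divide borel_measurable_sum borel_measurable_times meas_coord2; auto)
      from measurable_compose[OF this g_meas[OF eps]] show ?thesis .
    qed
    have "(\<integral>X. (proj L D X vs eps - model_out \<sigma> L D k v X)\<^sup>2 \<partial>data_X g L D ks eps)
        = (\<integral>X. g L eps (proj L D X ks) *\<^sub>R (proj L D X vs eps - model_out \<sigma> L D k v X)\<^sup>2 \<partial>gauss_mat L D)"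
      unfolding data_X_def by (rule integral_density[OF mF mg]) (simp add: g_nonneg[OF eps])
    also have "\<dots> = (\<integral>X. P.LHSf g \<sigma> L eps X \<partial>gauss_mat L D)"
      by (simp add: P.LHSf_def)
    also have "\<dots> = enn2real (\<integral>\<^sup>+X. ennreal (P.LHSf g \<sigma> L eps X) \<partial>gauss_mat L D)"
      by (rule integral_eq_nn_integral[OF mL]) (simp add: P.LHSf_def g_nonneg[OF eps])
    also have "\<dots> = enn2real (\<integral>\<^sup>+p. ennreal (P.Hs L eps (fst p) (snd p)) \<partial>(gI {..<L} \<Otimes>\<^sub>M gI {..<L}))"
      unfolding gm P.chain1[OF eps] P.chain2[OF eps] ..
    also have "\<dots> = (\<integral>p. P.Hs L eps (fst p) (snd p) \<partial>(gI {..<L} \<Otimes>\<^sub>M gI {..<L}))"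
    proof (rule integral_eq_nn_integral[symmetric])
      show "(\<lambda>p. P.Hs L eps (fst p) (snd p)) \<in> borel_measurable (gI {..<L} \<Otimes>\<^sub>M gI {..<L})"
        using P.meas_Hs[OF eps] by (simp add: case_prod_beta')
      show "AE p in gI {..<L} \<Otimes>\<^sub>M gI {..<L}. 0 \<le> P.Hs L eps (fst p) (snd p)"
        using P.Hs_nonneg[OF eps] by simp
    qed
    also have "\<dots> = (\<integral>(chi, xi). (let m_kk = dotp D k ks / D; m_vv = dotp D v vs / D;
               R_kk = sqrt (dotp D k k / D - m_kk\<^sup>2); R_vv = sqrt (dotp D v v / D - m_vv\<^sup>2);
               s = \<sigma> L (vec L (\<lambda>l. m_kk * chi l + R_kk * xi l))
           in g L eps chi * (1 - 2 * m_vv * s eps + (m_vv\<^sup>2 + R_vv\<^sup>2) * (\<Sum>l<L. s l * s l)))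
         \<partial>(gauss_vec L \<Otimes>\<^sub>M gauss_vec L))"
      unfolding gv
      by (rule Bochner_Integration.integral_cong refl)+
         (simp add: P.Hs_def P.sv_def P.mk_def P.mv_def P.Rk_def P.Rv_def Let_def split_beta')
    finally show ?thesis .
  qed
  show ?thesis
    unfolding risk_def
  proof (intro integral_cong_AE)
    show "AE L in measure_pmf PL. measure_pmf.expectation (pmf_of_set {..<L}) (\<lambda>eps.
         \<integral>X. (proj L D X vs eps - model_out \<sigma> L D k v X)\<^sup>2 \<partial>data_X g L D ks eps) =
      measure_pmf.expectation (pmf_of_set {..<L}) (\<lambda>eps.
         \<integral>(chi, xi). (let m_kk = dotp D k ks / D; m_vv = dotp D v vs / D;
               R_kk = sqrt (dotp D k k / D - m_kk\<^sup>2); R_vv = sqrt (dotp D v v / D - m_vv\<^sup>2);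
               s = \<sigma> L (vec L (\<lambda>l. m_kk * chi l + R_kk * xi l))
           in g L eps chi * (1 - 2 * m_vv * s eps + (m_vv\<^sup>2 + R_vv\<^sup>2) * (\<Sum>l<L. s l * s l)))
         \<partial>(gauss_vec L \<Otimes>\<^sub>M gauss_vec L))"
    proof (unfold AE_measure_pmf_iff, intro ballI integral_cong_AE)
      fix L assume L: "L \<in> set_pmf PL"
      then have "L \<ge> 1" using PL by auto
      then have "0 \<in> {..<L}" by simp
      then have ne: "{..<L} \<noteq> {}" by blast
      show "AE eps in measure_pmf (pmf_of_set {..<L}).
         (\<integral>X. (proj L D X vs eps - model_out \<sigma> L D k v X)\<^sup>2 \<partial>data_X g L D ks eps) =
         (\<integral>(chi, xi). (let m_kk = dotp D k ks / D; m_vv = dotp D v vs / D;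
               R_kk = sqrt (dotp D k k / D - m_kk\<^sup>2); R_vv = sqrt (dotp D v v / D - m_vv\<^sup>2);
               s = \<sigma> L (vec L (\<lambda>l. m_kk * chi l + R_kk * xi l))
           in g L eps chi * (1 - 2 * m_vv * s eps + (m_vv\<^sup>2 + R_vv\<^sup>2) * (\<Sum>l<L. s l * s l)))
         \<partial>(gauss_vec L \<Otimes>\<^sub>M gauss_vec L))"
        unfolding AE_measure_pmf_iff set_pmf_of_set[OF ne finite_lessThan]
        by (intro ballI per) simp
    qed simp_all
  qed simp_all
qed


end
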